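(* Let $\mathbb{K}$ be a field, $Q$ a Dynkin quiver, $\Lambda=\mathbb{K}Q$, $k\ge1$, and let $0\to M\to K\to N\to 0$ be an exact sequence in $\operatorname{mod}\Lambda$. Then the functor $\operatorname{Hom}_{\mathcal{S}^k}(\mathcal{P},-)$ is left exact on the sequence $0\to M\to K\to N\to M[1]\to K[1]\to N[1]\to M[2]\to\cdots\to M[k]\to K[k]\to N[k]\to 0$ in $\mathcal{S}^k$; that is, the induced sequence $0\to\operatorname{Hom}_{\mathcal{S}^k}(\mathcal{P},M)\to\operatorname{Hom}_{\mathcal{S}^k}(\mathcal{P},K)\to\cdots\to\operatorname{Hom}_{\mathcal{S}^k}(\mathcal{P},N[k])$ is exact.
   Context: $D^b(\operatorname{mod}\Lambda)$ is the bounded derived category with shift $[1]$. $\mathcal{S}^k$ is the full subcategory of $D^b(\operatorname{mod}\Lambda)$ with objects $X[j]$, $X\in\operatorname{mod}\Lambda$, $0\le j\le k$, and $\operatorname{Hom}_{\mathcal{S}^k}(X[i],Y[j])=\operatorname{Hom}_\Lambda(X,Y)$ if $i=j$, $\operatorname{Ext}^1_\Lambda(X,Y)$ if $i=j-1$, $0$ otherwise. $\mathcal{P}=\bigoplus_{0\le j\le k}G[j]$ where $G$ is the direct sum of representatives of the indecomposable $\Lambda$-modules. The displayed sequence consists of the shifts of the triangle $M\to K\to N\to M[1]$ induced by the short exact sequence (the map $N\to M[1]$ being the extension class), truncated to shifts $0,\dots,k$. *)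

theory Defs
  imports "Jordan_Normal_Form.Matrix" "HOL-Library.Multiset"
begin

text \<open>A finite quiver: vertices 0..nv-1, arrows indexed by positions of the list arr,
  arrow a goes from fst (arr!a) to snd (arr!a). Multiple arrows allowed.\<close>
record quiver =
  nv :: nat
  arr :: "(nat \<times> nat) list"

definition src :: "quiver \<Rightarrow> nat \<Rightarrow> nat" where "src Q a = fst (arr Q ! a)"
definition tgt :: "quiver \<Rightarrow> nat \<Rightarrow> nat" where "tgt Q a = snd (arr Q ! a)"

text \<open>Standard edge multisets of the Dynkin diagrams A_n, D_n, E_6, E_7, E_8 on {0..n-1}.\<close>
definition path_edges :: "nat \<Rightarrow> nat set multiset" where
  "path_edges m = mset (map (\<lambda>i. {i, Suc i}) [0..<m])"

definition dynkin_edges :: "nat \<Rightarrow> nat set multiset set" where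
  "dynkin_edges n =
     (if n \<ge> 1 then {path_edges (n - 1)} else {})
   \<union> (if n \<ge> 4 then {path_edges (n - 2) + {#{n - 3, n - 1}#}} else {})
   \<union> (if n \<in> {6, 7, 8} then {path_edges (n - 2) + {#{2, n - 1}#}} else {})"

definition dynkin :: "quiver \<Rightarrow> bool" where
  "dynkin Q \<longleftrightarrow> (\<forall>(s,t)\<in>set (arr Q). s < nv Q \<and> t < nv Q) \<and>
     (\<exists>\<sigma>. bij_betw \<sigma> {..<nv Q} {..<nv Q} \<and>
        mset (map (\<lambda>(s,t). {\<sigma> s, \<sigma> t}) (arr Q)) \<in> dynkin_edges (nv Q))"

record 'k rep =
  rdim :: "nat \<Rightarrow> nat"
  rmat :: "nat \<Rightarrow> 'k mat"

definition valid_rep :: "quiver \<Rightarrow> 'k rep \<Rightarrow> bool" where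
  "valid_rep Q X \<longleftrightarrow> (\<forall>a<length (arr Q). rmat X a \<in> carrier_mat (rdim X (tgt Q a)) (rdim X (src Q a)))"

type_synonym 'k rhom = "nat \<Rightarrow> 'k mat"

definition hom :: "quiver \<Rightarrow> 'k::field rep \<Rightarrow> 'k rep \<Rightarrow> 'k rhom set" where
  "hom Q X Y = {f. (\<forall>v<nv Q. f v \<in> carrier_mat (rdim Y v) (rdim X v)) \<and>
                   (\<forall>v. v \<ge> nv Q \<longrightarrow> f v = 0\<^sub>m 0 0) \<and>
                   (\<forall>a<length (arr Q). rmat Y a * f (src Q a) = f (tgt Q a) * rmat X a)}"

definition comp :: "quiver \<Rightarrow> 'k::field rhom \<Rightarrow> 'k rhom \<Rightarrow> 'k rhom" where
  "comp Q g f = (\<lambda>v. if v < nv Q then g v * f v else 0\<^sub>m 0 0)"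

definition idh :: "quiver \<Rightarrow> 'k::field rep \<Rightarrow> 'k rhom" where
  "idh Q X = (\<lambda>v. if v < nv Q then 1\<^sub>m (rdim X v) else 0\<^sub>m 0 0)"

definition zeroh :: "quiver \<Rightarrow> 'k::field rep \<Rightarrow> 'k rep \<Rightarrow> 'k rhom" where
  "zeroh Q X Y = (\<lambda>v. if v < nv Q then 0\<^sub>m (rdim Y v) (rdim X v) else 0\<^sub>m 0 0)"

definition ses :: "quiver \<Rightarrow> 'k::field rep \<Rightarrow> 'k rep \<Rightarrow> 'k rep \<Rightarrow> 'k rhom \<Rightarrow> 'k rhom \<Rightarrow> bool" where
  "ses Q Y E X \<alpha> \<beta> \<longleftrightarrow> valid_rep Q Y \<and> valid_rep Q E \<and> valid_rep Q X \<and>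
     \<alpha> \<in> hom Q Y E \<and> \<beta> \<in> hom Q E X \<and>
     (\<forall>v<nv Q.
        (\<forall>x\<in>carrier_vec (rdim Y v). \<alpha> v *\<^sub>v x = 0\<^sub>v (rdim E v) \<longrightarrow> x = 0\<^sub>v (rdim Y v)) \<and>
        (\<forall>z\<in>carrier_vec (rdim X v). \<exists>y\<in>carrier_vec (rdim E v). \<beta> v *\<^sub>v y = z) \<and>
        (\<forall>y\<in>carrier_vec (rdim E v).
            \<beta> v *\<^sub>v y = 0\<^sub>v (rdim X v) \<longleftrightarrow> (\<exists>x\<in>carrier_vec (rdim Y v). \<alpha> v *\<^sub>v x = y)))"

definition dsum :: "quiver \<Rightarrow> 'k::field rep \<Rightarrow> 'k rep \<Rightarrow> 'k rep" where
  "dsum Q X Y = \<lparr>rdim = (\<lambda>v. rdim X v + rdim Y v),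
     rmat = (\<lambda>a. four_block_mat (rmat X a) (0\<^sub>m (rdim X (tgt Q a)) (rdim Y (src Q a)))
                                 (0\<^sub>m (rdim Y (tgt Q a)) (rdim X (src Q a))) (rmat Y a))\<rparr>"

definition zero_rep :: "'k::field rep" where
  "zero_rep = \<lparr>rdim = (\<lambda>v. 0), rmat = (\<lambda>a. 0\<^sub>m 0 0)\<rparr>"

definition dsum_list :: "quiver \<Rightarrow> 'k::field rep list \<Rightarrow> 'k rep" where
  "dsum_list Q Rs = foldr (dsum Q) Rs zero_rep"

definition is_zero_rep :: "quiver \<Rightarrow> 'k rep \<Rightarrow> bool" where
  "is_zero_rep Q X \<longleftrightarrow> (\<forall>v<nv Q. rdim X v = 0)"

definition iso_rep :: "quiver \<Rightarrow> 'k::field rep \<Rightarrow> 'k rep \<Rightarrow> bool" where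
  "iso_rep Q X Y \<longleftrightarrow> (\<exists>f\<in>hom Q X Y. \<exists>g\<in>hom Q Y X. comp Q g f = idh Q X \<and> comp Q f g = idh Q Y)"

definition indec :: "quiver \<Rightarrow> 'k::field rep \<Rightarrow> bool" where
  "indec Q X \<longleftrightarrow> valid_rep Q X \<and> \<not> is_zero_rep Q X \<and>
     (\<forall>A B. valid_rep Q A \<and> valid_rep Q B \<and> iso_rep Q X (dsum Q A B) \<longrightarrow>
            is_zero_rep Q A \<or> is_zero_rep Q B)"

definition is_basic_generator :: "quiver \<Rightarrow> 'k::field rep \<Rightarrow> bool" where
  "is_basic_generator Q G \<longleftrightarrow> (\<exists>Rs. G = dsum_list Q Rs \<and> (\<forall>R\<in>set Rs. indec Q R) \<and>
     (\<forall>i<length Rs. \<forall>j<length Rs. i \<noteq> j \<longrightarrow> \<not> iso_rep Q (Rs ! i) (Rs ! j)) \<and>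
     (\<forall>X. indec Q X \<longrightarrow> (\<exists>R\<in>set Rs. iso_rep Q X R)))"

type_synonym 'k ext = "'k rep \<times> 'k rhom \<times> 'k rhom"

definition ext_of :: "quiver \<Rightarrow> 'k::field rep \<Rightarrow> 'k rep \<Rightarrow> 'k ext \<Rightarrow> bool" where
  "ext_of Q X Y e \<longleftrightarrow> (case e of (E, \<alpha>, \<beta>) \<Rightarrow> ses Q Y E X \<alpha> \<beta>)"

definition ext_hom :: "quiver \<Rightarrow> 'k::field rep \<Rightarrow> 'k rep \<Rightarrow> 'k ext \<Rightarrow> 'k rep \<Rightarrow> 'k rep \<Rightarrow> 'k ext
     \<Rightarrow> 'k rhom \<Rightarrow> 'k rhom \<Rightarrow> 'k rhom \<Rightarrow> bool" where
  "ext_hom Q Y X e Y' X' e' a \<phi> b \<longleftrightarrow>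
     (case e of (E, \<alpha>, \<beta>) \<Rightarrow> case e' of (E', \<alpha>', \<beta>') \<Rightarrow>
       a \<in> hom Q Y Y' \<and> \<phi> \<in> hom Q E E' \<and> b \<in> hom Q X X' \<and>
       comp Q \<phi> \<alpha> = comp Q \<alpha>' a \<and> comp Q \<beta>' \<phi> = comp Q b \<beta>)"

definition ext_cls :: "quiver \<Rightarrow> 'k::field rep \<Rightarrow> 'k rep \<Rightarrow> 'k ext \<Rightarrow> 'k ext set" where
  "ext_cls Q X Y e = {e'. ext_of Q X Y e' \<and> (\<exists>\<phi>. ext_hom Q Y X e Y X e' (idh Q Y) \<phi> (idh Q X))}"

definition Ext1 :: "quiver \<Rightarrow> 'k::field rep \<Rightarrow> 'k rep \<Rightarrow> 'k ext set set" where
  "Ext1 Q X Y = {ext_cls Q X Y e | e. ext_of Q X Y e}"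

text \<open>Zero of Ext^1(X,Y): the class of split extensions.\<close>
definition split_cls :: "quiver \<Rightarrow> 'k::field rep \<Rightarrow> 'k rep \<Rightarrow> 'k ext set" where
  "split_cls Q X Y = {e. ext_of Q X Y e \<and>
      (case e of (E, \<alpha>, \<beta>) \<Rightarrow> \<exists>s\<in>hom Q X E. comp Q \<beta> s = idh Q X)}"

definition push :: "quiver \<Rightarrow> 'k::field rep \<Rightarrow> 'k rep \<Rightarrow> 'k rep \<Rightarrow> 'k rhom \<Rightarrow> 'k ext set \<Rightarrow> 'k ext set" where
  "push Q X Y Y' g c = {e'. ext_of Q X Y' e' \<and>
      (\<exists>e\<in>c. \<exists>\<phi>. ext_hom Q Y X e Y' X e' g \<phi> (idh Q X))}"

definition pull :: "quiver \<Rightarrow> 'k::field rep \<Rightarrow> 'k rep \<Rightarrow> 'k rep \<Rightarrow> 'k rhom \<Rightarrow> 'k ext set \<Rightarrow> 'k ext set" where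
  "pull Q X' X Y f c = {e'. ext_of Q X' Y e' \<and>
      (\<exists>e\<in>c. \<exists>\<phi>. ext_hom Q Y X' e' Y X e (idh Q Y) \<phi> f)}"

text \<open>Morphisms X[i] \<rightarrow> Y[j] in S^k: a module map (i = j), an Ext^1 class (i = j - 1), or 0.\<close>
datatype 'k smor = SHom "'k rhom" | SExt "'k ext set" | SZero

definition shom :: "quiver \<Rightarrow> 'k::field rep \<Rightarrow> nat \<Rightarrow> 'k rep \<Rightarrow> nat \<Rightarrow> 'k smor set" where
  "shom Q X i Y j = (if i = j then SHom ` hom Q X Y
                     else if Suc i = j then SExt ` Ext1 Q X Y else {SZero})"

definition szero :: "quiver \<Rightarrow> 'k::field rep \<Rightarrow> nat \<Rightarrow> 'k rep \<Rightarrow> nat \<Rightarrow> 'k smor" where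
  "szero Q X i Y j = (if i = j then SHom (zeroh Q X Y)
                      else if Suc i = j then SExt (split_cls Q X Y) else SZero)"

text \<open>Composition u \<circ> v for v : W[l] \<rightarrow> X[i], u : X[i] \<rightarrow> Y[j] (as in D^b(mod \<Lambda>)).\<close>
definition scomp :: "quiver \<Rightarrow> 'k::field rep \<Rightarrow> nat \<Rightarrow> 'k rep \<Rightarrow> 'k rep \<Rightarrow> nat
     \<Rightarrow> 'k smor \<Rightarrow> 'k smor \<Rightarrow> 'k smor" where
  "scomp Q W l X Y j u v = (case (u, v) of
      (SHom g, SHom f) \<Rightarrow> SHom (comp Q g f)
    | (SHom g, SExt c) \<Rightarrow> SExt (push Q W X Y g c)
    | (SExt c, SHom f) \<Rightarrow> SExt (pull Q W X Y f c)
    | _ \<Rightarrow> szero Q W l Y j)"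

text \<open>Hom_{S^k}(P, X[i]) for P = \<Oplus>_{0\<le>j\<le>k} G[j]: tuples of components G[j] \<rightarrow> X[i].\<close>
definition homP :: "quiver \<Rightarrow> 'k::field rep \<Rightarrow> nat \<Rightarrow> 'k rep \<Rightarrow> nat \<Rightarrow> (nat \<Rightarrow> 'k smor) set" where
  "homP Q G k X i = {\<phi>. (\<forall>j\<le>k. \<phi> j \<in> shom Q G j X i) \<and> (\<forall>j>k. \<phi> j = SZero)}"

definition zeroP :: "quiver \<Rightarrow> 'k::field rep \<Rightarrow> nat \<Rightarrow> 'k rep \<Rightarrow> nat \<Rightarrow> nat \<Rightarrow> 'k smor" where
  "zeroP Q G k X i = (\<lambda>j. if j \<le> k then szero Q G j X i else SZero)"

definition homP_map :: "quiver \<Rightarrow> 'k::field rep \<Rightarrow> nat \<Rightarrow> 'k rep \<Rightarrow> 'k rep \<Rightarrow> nat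
     \<Rightarrow> 'k smor \<Rightarrow> (nat \<Rightarrow> 'k smor) \<Rightarrow> (nat \<Rightarrow> 'k smor)" where
  "homP_map Q G k X Y j u \<phi> = (\<lambda>l. if l \<le> k then scomp Q G l X Y j u (\<phi> l) else SZero)"

text \<open>Position m (0 \<le> m \<le> 3k+2): object (M, K or N)[m div 3].\<close>
definition seq_obj :: "'k rep \<Rightarrow> 'k rep \<Rightarrow> 'k rep \<Rightarrow> nat \<Rightarrow> 'k rep" where
  "seq_obj M K N m = (if m mod 3 = 0 then M else if m mod 3 = 1 then K else N)"

definition seq_shift :: "nat \<Rightarrow> nat" where
  "seq_shift m = m div 3"

text \<open>Map from position m to m+1: \<iota>[i], p[i], or the extension class \<eta>[i] : N[i] \<rightarrow> M[i+1].\<close>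
definition seq_map :: "quiver \<Rightarrow> 'k::field rep \<Rightarrow> 'k rep \<Rightarrow> 'k rep \<Rightarrow> 'k rhom \<Rightarrow> 'k rhom \<Rightarrow> nat \<Rightarrow> 'k smor" where
  "seq_map Q M K N \<iota> p m = (if m mod 3 = 0 then SHom \<iota> else if m mod 3 = 1 then SHom p
                            else SExt (ext_cls Q N M (K, \<iota>, p)))"

definition induced :: "quiver \<Rightarrow> 'k::field rep \<Rightarrow> nat \<Rightarrow> 'k rep \<Rightarrow> 'k rep \<Rightarrow> 'k rep
     \<Rightarrow> 'k rhom \<Rightarrow> 'k rhom \<Rightarrow> nat \<Rightarrow> (nat \<Rightarrow> 'k smor) \<Rightarrow> (nat \<Rightarrow> 'k smor)" where
  "induced Q G k M K N \<iota> p m = homP_map Q G k (seq_obj M K N m) (seq_obj M K N (Suc m))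
       (seq_shift (Suc m)) (seq_map Q M K N \<iota> p m)"

end

theory Submission
  imports Defs
begin

lemma massoc: fixes A :: "'a::semiring_0 mat"
  shows "dim_col A = dim_row B \<Longrightarrow> dim_col B = dim_row C \<Longrightarrow> A * B * C = A * (B * C)"
  by (rule assoc_mult_mat[of A "dim_row A" "dim_col A" B "dim_col B" C "dim_col C"]) auto
lemma mdistl: fixes A :: "'a::semiring_0 mat"
  shows "dim_col A = dim_row B \<Longrightarrow> dim_row B = dim_row C \<Longrightarrow> dim_col B = dim_col C \<Longrightarrow> A * (B + C) = A * B + A * C"
  by (rule mult_add_distrib_mat[of A "dim_row A" "dim_col A" B "dim_col B"]) auto
lemma mdistr: fixes A :: "'a::semiring_0 mat"
  shows "dim_row A = dim_row B \<Longrightarrow> dim_col A = dim_col B \<Longrightarrow> dim_col A = dim_row C \<Longrightarrow> (A + B) * C = A * C + B * C"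
  by (rule add_mult_distrib_mat[of A "dim_row A" "dim_col A" B C "dim_col C"]) auto
lemma mdistl_minus: fixes A :: "'a::ring mat"
  shows "dim_col A = dim_row B \<Longrightarrow> dim_row B = dim_row C \<Longrightarrow> dim_col B = dim_col C \<Longrightarrow> A * (B - C) = A * B - A * C"
  by (rule mult_minus_distrib_mat[of A "dim_row A" "dim_col A" B "dim_col B"]) auto
lemma mdistr_minus: fixes A :: "'a::ring mat"
  shows "dim_row A = dim_row B \<Longrightarrow> dim_col A = dim_col B \<Longrightarrow> dim_col A = dim_row C \<Longrightarrow> (A - B) * C = A * C - B * C"
  by (rule minus_mult_distrib_mat[of A "dim_row A" "dim_col A" B C "dim_col C"]) auto
lemma mzero_add: fixes A :: "'a::monoid_add mat"
  shows "dim_row A = n \<Longrightarrow> dim_col A = m \<Longrightarrow> 0\<^sub>m n m + A = A"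
  by (intro eq_matI) auto
lemma madd_zero: fixes A :: "'a::monoid_add mat"
  shows "dim_row A = n \<Longrightarrow> dim_col A = m \<Longrightarrow> A + 0\<^sub>m n m = A"
  by (intro eq_matI) auto
lemma mminus_zero: fixes A :: "'a::group_add mat"
  shows "dim_row A = n \<Longrightarrow> dim_col A = m \<Longrightarrow> A - 0\<^sub>m n m = A"
  by (intro eq_matI) auto
lemma mzero_mult: fixes A :: "'a::semiring_0 mat"
  shows "dim_row A = m \<Longrightarrow> 0\<^sub>m n m * A = 0\<^sub>m n (dim_col A)"
  by simp
lemma mmult_zero: fixes A :: "'a::semiring_0 mat"
  shows "dim_col A = m \<Longrightarrow> A * 0\<^sub>m m n = 0\<^sub>m (dim_row A) n"
  by simp
lemma madd_comm: fixes A :: "'a::ab_semigroup_add mat"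
  shows "dim_row A = dim_row B \<Longrightarrow> dim_col A = dim_col B \<Longrightarrow> A + B = B + A"
  by (intro eq_matI) (auto simp: add.commute)
lemma madd_assoc: fixes A :: "'a::semigroup_add mat"
  shows "dim_row A = dim_row B \<Longrightarrow> dim_col A = dim_col B \<Longrightarrow> dim_row B = dim_row C \<Longrightarrow> dim_col B = dim_col C \<Longrightarrow> A + B + C = A + (B + C)"
  by (intro eq_matI) (auto simp: add.assoc)
lemma mone_mult: fixes A :: "'a::semiring_1 mat"
  shows "dim_row A = n \<Longrightarrow> 1\<^sub>m n * A = A" by simp
lemma mmult_one: fixes A :: "'a::semiring_1 mat"
  shows "dim_col A = n \<Longrightarrow> A * 1\<^sub>m n = A" by simp
lemma madd_minus_cancel: fixes A :: "'a::ab_group_add mat"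
  shows "dim_row A = dim_row B \<Longrightarrow> dim_col A = dim_col B \<Longrightarrow> A + B - B = A"
  by (intro eq_matI) auto
lemma mminus_add_cancel: fixes A :: "'a::ab_group_add mat"
  shows "dim_row A = dim_row B \<Longrightarrow> dim_col A = dim_col B \<Longrightarrow> A - B + B = A"
  by (intro eq_matI) auto
lemma mminus_self: fixes A :: "'a::ab_group_add mat"
  shows "A - A = 0\<^sub>m (dim_row A) (dim_col A)"
  by (intro eq_matI) auto
lemma mminus_eq_iff: fixes A :: "'a::ab_group_add mat"
  shows "dim_row A = dim_row B \<Longrightarrow> dim_col A = dim_col B \<Longrightarrow> dim_row C = dim_row B \<Longrightarrow> dim_col C = dim_col B
     \<Longrightarrow> (A - B = C) = (A = C + B)"
  by (auto intro!: eq_matI simp: mat_eq_iff algebra_simps)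

lemma madd_lcomm: fixes A :: "'a::ab_semigroup_add mat"
  shows "dim_row A = dim_row B \<Longrightarrow> dim_col A = dim_col B \<Longrightarrow> dim_row B = dim_row C \<Longrightarrow> dim_col B = dim_col C \<Longrightarrow> A + (B + C) = B + (A + C)"
  by (intro eq_matI) (auto simp: add.left_commute)
lemmas madd_ac = madd_assoc madd_comm madd_lcomm

lemma rearr1: fixes A1 :: "'a::comm_ring mat"
  assumes "A1 \<in> carrier_mat n m" "B \<in> carrier_mat n m" "L1 \<in> carrier_mat n m" "L2 \<in> carrier_mat n m"
    "R1 \<in> carrier_mat n m" "R2 \<in> carrier_mat n m" and h: "R1 + R2 = L2 + L1"
  shows "A1 + (L1 + B) + L2 = A1 + R1 + B + R2"
proof (rule eq_matI)
  fix i j assume ij: "i < dim_row (A1 + R1 + B + R2)" "j < dim_col (A1 + R1 + B + R2)"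
  note [simp] = carrier_matD[OF assms(1)] carrier_matD[OF assms(2)] carrier_matD[OF assms(3)]
    carrier_matD[OF assms(4)] carrier_matD[OF assms(5)] carrier_matD[OF assms(6)]
  have ij': "i < n" "j < m" using ij by simp_all
  have "R1 $$ (i, j) + R2 $$ (i, j) = (R1 + R2) $$ (i, j)" using ij' by simp
  also have "\<dots> = (L2 + L1) $$ (i, j)" using h by simp
  also have "\<dots> = L2 $$ (i, j) + L1 $$ (i, j)" using ij' by simp
  finally have "R1 $$ (i, j) + R2 $$ (i, j) = L2 $$ (i, j) + L1 $$ (i, j)" .
  then show "(A1 + (L1 + B) + L2) $$ (i, j) = (A1 + R1 + B + R2) $$ (i, j)"
    using assms ij by (simp add: algebra_simps)
qed (use assms in simp_all)

lemmas mring = massoc mdistl mdistr mdistl_minus mdistr_minus mzero_add madd_zero mminus_zero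
  mone_mult mmult_one

section \<open>Linear algebra\<close>

lemma mat_eq_vec:
  fixes A B :: "'a::field mat"
  assumes "A \<in> carrier_mat n m" "B \<in> carrier_mat n m"
    and "\<And>x. x \<in> carrier_vec m \<Longrightarrow> A *\<^sub>v x = B *\<^sub>v x"
  shows "A = B"
proof (rule eq_matI)
  fix i j assume i: "i < dim_row B" and j: "j < dim_col B"
  have "(A *\<^sub>v unit_vec m j) $ i = (B *\<^sub>v unit_vec m j) $ i" using assms(3) by simp
  moreover have "(A *\<^sub>v unit_vec m j) $ i = A $$ (i, j)" "(B *\<^sub>v unit_vec m j) $ i = B $$ (i, j)"
    using assms(1,2) i j by (auto simp: carrier_matD)
  ultimately show "A $$ (i, j) = B $$ (i, j)" by simp
qed (use assms in auto)

lemma factor_mat: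
  fixes A C :: "'a::field mat"
  assumes A: "A \<in> carrier_mat n m" and C: "C \<in> carrier_mat n k"
    and ex: "\<And>z. z \<in> carrier_vec k \<Longrightarrow> \<exists>y\<in>carrier_vec m. A *\<^sub>v y = C *\<^sub>v z"
  shows "\<exists>R\<in>carrier_mat m k. A * R = C"
proof -
  define ys where "ys = map (\<lambda>j. SOME y. y \<in> carrier_vec m \<and> A *\<^sub>v y = C *\<^sub>v unit_vec k j) [0..<k]"
  have ys: "\<And>j. j < k \<Longrightarrow> ys ! j \<in> carrier_vec m \<and> A *\<^sub>v (ys ! j) = C *\<^sub>v unit_vec k j"
  proof -
    fix j assume j: "j < k"
    have "\<exists>y. y \<in> carrier_vec m \<and> A *\<^sub>v y = C *\<^sub>v unit_vec k j" using ex[of "unit_vec k j"] by auto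
    from someI_ex[OF this] show "ys ! j \<in> carrier_vec m \<and> A *\<^sub>v (ys ! j) = C *\<^sub>v unit_vec k j"
      using j unfolding ys_def by simp
  qed
  define R where "R = mat_of_cols m ys"
  have lys: "length ys = k" unfolding ys_def by simp
  have R: "R \<in> carrier_mat m k" unfolding R_def using mat_of_cols_carrier(1)[of m ys] lys by simp
  have "A * R = C"
  proof (rule eq_matI)
    fix i j assume i: "i < dim_row C" and j: "j < dim_col C"
    have j': "j < k" using j C by auto
    have colR: "col R j = ys ! j" unfolding R_def using j' lys ys[OF j'] by (simp add: col_mat_of_cols)
    have "(A * R) $$ (i, j) = row A i \<bullet> col R j" using i j A R C by auto
    also have "\<dots> = (A *\<^sub>v col R j) $ i" using i A C by auto
    also have "\<dots> = (C *\<^sub>v unit_vec k j) $ i" using colR ys[OF j'] by simp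
    also have "\<dots> = C $$ (i, j)" using i j C by auto
    finally show "(A * R) $$ (i, j) = C $$ (i, j)" .
  qed (use A R C in auto)
  with R show ?thesis by blast
qed

lemma vec_eq_minus0: fixes x :: "'a::ab_group_add vec"
  shows "x \<in> carrier_vec n \<Longrightarrow> y \<in> carrier_vec n \<Longrightarrow> x - y = 0\<^sub>v n \<Longrightarrow> x = y"
proof (intro eq_vecI)
  fix i assume "x \<in> carrier_vec n" "y \<in> carrier_vec n" "x - y = 0\<^sub>v n" "i < dim_vec y"
  then have "(x - y) $ i = 0" by simp
  thus "x $ i = y $ i" using \<open>i < dim_vec y\<close> \<open>y \<in> carrier_vec n\<close> by simp
qed simp

lemma left_cancel_inj:
  fixes A B C :: "'a::field mat"
  assumes A: "A \<in> carrier_mat n m" and inj: "\<And>x. x \<in> carrier_vec m \<Longrightarrow> A *\<^sub>v x = 0\<^sub>v n \<Longrightarrow> x = 0\<^sub>v m"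
    and B: "B \<in> carrier_mat m k" and C: "C \<in> carrier_mat m k" and eq: "A * B = A * C"
  shows "B = C"
proof (rule mat_eq_vec[OF B C])
  fix x :: "'a vec" assume x: "x \<in> carrier_vec k"
  have Bx: "B *\<^sub>v x \<in> carrier_vec m" and Cx: "C *\<^sub>v x \<in> carrier_vec m" using B C x by auto
  have "A *\<^sub>v (B *\<^sub>v x - C *\<^sub>v x) = A *\<^sub>v (B *\<^sub>v x) - A *\<^sub>v (C *\<^sub>v x)"
    by (rule mult_minus_distrib_mat_vec[OF A Bx Cx])
  also have "A *\<^sub>v (B *\<^sub>v x) = A *\<^sub>v (C *\<^sub>v x)"
    using assoc_mult_mat_vec[OF A B x] assoc_mult_mat_vec[OF A C x] eq by simp
  also have "A *\<^sub>v (C *\<^sub>v x) - A *\<^sub>v (C *\<^sub>v x) = 0\<^sub>v n"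
    by (rule minus_cancel_vec) (use A Cx in simp)
  finally have "B *\<^sub>v x - C *\<^sub>v x = 0\<^sub>v m" using inj Bx Cx by simp
  thus "B *\<^sub>v x = C *\<^sub>v x" by (rule vec_eq_minus0[OF Bx Cx])
qed

lemma zero_mat_mult_vec: "(v :: 'a::semiring_0 vec) \<in> carrier_vec y \<Longrightarrow> 0\<^sub>m x y *\<^sub>v v = 0\<^sub>v x"
  by (intro eq_vecI) (auto simp: scalar_prod_def)

lemma mat_mult_zero_vec: "(A :: 'a::semiring_0 mat) *\<^sub>v 0\<^sub>v (dim_col A) = 0\<^sub>v (dim_row A)"
  by (intro eq_vecI) (auto simp: scalar_prod_def)

lemma vertex_split:
  fixes \<alpha> \<beta> :: "'a::field mat"
  assumes a: "\<alpha> \<in> carrier_mat e y" and b: "\<beta> \<in> carrier_mat x e"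
    and inj: "\<forall>v\<in>carrier_vec y. \<alpha> *\<^sub>v v = 0\<^sub>v e \<longrightarrow> v = 0\<^sub>v y"
    and surj: "\<forall>z\<in>carrier_vec x. \<exists>w\<in>carrier_vec e. \<beta> *\<^sub>v w = z"
    and exact: "\<forall>w\<in>carrier_vec e. \<beta> *\<^sub>v w = 0\<^sub>v x \<longleftrightarrow> (\<exists>v\<in>carrier_vec y. \<alpha> *\<^sub>v v = w)"
  shows "\<exists>s r. s \<in> carrier_mat e x \<and> r \<in> carrier_mat y e \<and> \<beta> * s = 1\<^sub>m x \<and> r * \<alpha> = 1\<^sub>m y \<and>
      \<alpha> * r + s * \<beta> = 1\<^sub>m e \<and> r * s = 0\<^sub>m y x \<and> \<beta> * \<alpha> = 0\<^sub>m x y"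
proof -
  note da[simp] = carrier_matD[OF a] and db[simp] = carrier_matD[OF b]
  have ba: "\<beta> * \<alpha> = 0\<^sub>m x y"
  proof (rule mat_eq_vec[of _ x y])
    fix v :: "'a vec" assume v: "v \<in> carrier_vec y"
    have "(\<beta> * \<alpha>) *\<^sub>v v = \<beta> *\<^sub>v (\<alpha> *\<^sub>v v)" using assoc_mult_mat_vec[OF b a v] .
    also have "\<dots> = 0\<^sub>v x"
    proof -
      have av: "\<alpha> *\<^sub>v v \<in> carrier_vec e" using a v by simp
      show ?thesis using exact[rule_format, OF av] v by blast
    qed
    finally show "(\<beta> * \<alpha>) *\<^sub>v v = 0\<^sub>m x y *\<^sub>v v" using v by (simp add: zero_mat_mult_vec)
  qed (use a b in simp_all)
  have "\<exists>R\<in>carrier_mat e x. \<beta> * R = 1\<^sub>m x"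
  proof (rule factor_mat[OF b one_carrier_mat])
    fix z :: "'a vec" assume z: "z \<in> carrier_vec x"
    have "1\<^sub>m x *\<^sub>v z = z" using z by simp
    thus "\<exists>w\<in>carrier_vec e. \<beta> *\<^sub>v w = 1\<^sub>m x *\<^sub>v z" using surj z by simp
  qed
  then obtain s where s: "s \<in> carrier_mat e x" and bs: "\<beta> * s = 1\<^sub>m x" by blast
  note ds[simp] = carrier_matD[OF s]
  have C: "1\<^sub>m e - s * \<beta> \<in> carrier_mat e e" using s b by (simp add: minus_carrier_mat)
  have "\<exists>R\<in>carrier_mat y e. \<alpha> * R = 1\<^sub>m e - s * \<beta>"
  proof (rule factor_mat[OF a C])
    fix z :: "'a vec" assume z: "z \<in> carrier_vec e"
    have Cz: "(1\<^sub>m e - s * \<beta>) *\<^sub>v z \<in> carrier_vec e" using C z by simp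
    have "\<beta> *\<^sub>v ((1\<^sub>m e - s * \<beta>) *\<^sub>v z) = (\<beta> * (1\<^sub>m e - s * \<beta>)) *\<^sub>v z"
      using assoc_mult_mat_vec[OF b C z] by simp
    also have "\<beta> * (1\<^sub>m e - s * \<beta>) = \<beta> - (\<beta> * s) * \<beta>"
      by (simp add: mring)
    also have "\<dots> = 0\<^sub>m x e" using bs by (simp add: mminus_self)
    finally have "\<beta> *\<^sub>v ((1\<^sub>m e - s * \<beta>) *\<^sub>v z) = 0\<^sub>v x" using z by (simp add: zero_mat_mult_vec)
    with exact[rule_format, OF Cz] show "\<exists>y'\<in>carrier_vec y. \<alpha> *\<^sub>v y' = (1\<^sub>m e - s * \<beta>) *\<^sub>v z" by blast
  qed
  then obtain r where r: "r \<in> carrier_mat y e" and ar: "\<alpha> * r = 1\<^sub>m e - s * \<beta>" by blast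
  note dr[simp] = carrier_matD[OF r]
  have injv: "\<And>v. v \<in> carrier_vec y \<Longrightarrow> \<alpha> *\<^sub>v v = 0\<^sub>v e \<Longrightarrow> v = 0\<^sub>v y" using inj by blast
  have ra: "r * \<alpha> = 1\<^sub>m y"
  proof (rule left_cancel_inj[OF a injv, where k=y])
    have "\<alpha> * (r * \<alpha>) = (\<alpha> * r) * \<alpha>" by (simp add: mring)
    also have "\<dots> = \<alpha> - s * (\<beta> * \<alpha>)" unfolding ar by (simp add: mring)
    also have "\<dots> = \<alpha> * 1\<^sub>m y" using ba by (simp add: mring)
    finally show "\<alpha> * (r * \<alpha>) = \<alpha> * 1\<^sub>m y" .
  qed (use r a in simp_all)
  have rs: "r * s = 0\<^sub>m y x"
  proof (rule left_cancel_inj[OF a injv, where k=x])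
    have "\<alpha> * (r * s) = (\<alpha> * r) * s" by (simp add: mring)
    also have "\<dots> = s - s * (\<beta> * s)" unfolding ar by (simp add: mring)
    also have "\<dots> = \<alpha> * 0\<^sub>m y x" using bs by (simp add: mring mminus_self)
    finally show "\<alpha> * (r * s) = \<alpha> * 0\<^sub>m y x" .
  qed (use r s in simp_all)
  have "\<alpha> * r + s * \<beta> = 1\<^sub>m e" unfolding ar by (simp add: mminus_add_cancel)
  with s r bs ra rs ba show ?thesis by blast
qed


definition wfq :: "quiver \<Rightarrow> bool" where
  "wfq Q \<longleftrightarrow> (\<forall>a<length (arr Q). src Q a < nv Q \<and> tgt Q a < nv Q)"

lemma dynkin_wfq: "dynkin Q \<Longrightarrow> wfq Q"
  unfolding dynkin_def wfq_def src_def tgt_def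
  by (metis (no_types, lifting) case_prodD nth_mem prod.collapse)

lemma wfq_D: "wfq Q \<Longrightarrow> a < length (arr Q) \<Longrightarrow> src Q a < nv Q"
  "wfq Q \<Longrightarrow> a < length (arr Q) \<Longrightarrow> tgt Q a < nv Q"
  unfolding wfq_def by auto

lemma valid_rep_dims: "valid_rep Q X \<Longrightarrow> a < length (arr Q) \<Longrightarrow>
   dim_row (rmat X a) = rdim X (tgt Q a) \<and> dim_col (rmat X a) = rdim X (src Q a)"
  unfolding valid_rep_def by auto

lemma valid_rep_carrier: "valid_rep Q X \<Longrightarrow> a < length (arr Q) \<Longrightarrow>
   rmat X a \<in> carrier_mat (rdim X (tgt Q a)) (rdim X (src Q a))"
  unfolding valid_rep_def by auto

lemma hom_dims: "f \<in> hom Q X Y \<Longrightarrow> v < nv Q \<Longrightarrow> dim_row (f v) = rdim Y v \<and> dim_col (f v) = rdim X v"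
  unfolding hom_def by auto

lemma hom_carrier: "f \<in> hom Q X Y \<Longrightarrow> v < nv Q \<Longrightarrow> f v \<in> carrier_mat (rdim Y v) (rdim X v)"
  unfolding hom_def by auto

lemma hom_comm: "f \<in> hom Q X Y \<Longrightarrow> a < length (arr Q) \<Longrightarrow> rmat Y a * f (src Q a) = f (tgt Q a) * rmat X a"
  unfolding hom_def by auto

lemma hom_out: "f \<in> hom Q X Y \<Longrightarrow> \<not> v < nv Q \<Longrightarrow> f v = 0\<^sub>m 0 0"
  unfolding hom_def by auto

lemma homI:
  assumes "\<And>v. v < nv Q \<Longrightarrow> f v \<in> carrier_mat (rdim Y v) (rdim X v)"
    "\<And>v. \<not> v < nv Q \<Longrightarrow> f v = 0\<^sub>m 0 0"
    "\<And>a. a < length (arr Q) \<Longrightarrow> rmat Y a * f (src Q a) = f (tgt Q a) * rmat X a"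
  shows "f \<in> hom Q X Y"
  using assms unfolding hom_def by auto

lemma comp_eq_iff: "comp Q f g = comp Q f' g' \<longleftrightarrow> (\<forall>v<nv Q. f v * g v = f' v * g' v)"
  unfolding comp_def by (auto simp: fun_eq_iff)

lemma comp_apply: "v < nv Q \<Longrightarrow> comp Q f g v = f v * g v"
  unfolding comp_def by simp

lemma comp_hom:
  assumes wf: "wfq Q" and vY: "valid_rep Q Y" and vZ: "valid_rep Q Z" and vX: "valid_rep Q X"
    and f: "f \<in> hom Q Y Z" and g: "g \<in> hom Q X Y"
  shows "comp Q f g \<in> hom Q X Z"
proof (rule homI)
  fix a assume a: "a < length (arr Q)"
  note [simp] = wfq_D[OF wf a] hom_dims[OF f] hom_dims[OF g] comp_apply valid_rep_dims[OF vX a]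
    valid_rep_dims[OF vY a] valid_rep_dims[OF vZ a]
  have "rmat Z a * (f (src Q a) * g (src Q a)) = (rmat Z a * f (src Q a)) * g (src Q a)"
    by (simp add: mring)
  also have "\<dots> = f (tgt Q a) * (rmat Y a * g (src Q a))" by (simp add: mring hom_comm[OF f a])
  also have "\<dots> = (f (tgt Q a) * g (tgt Q a)) * rmat X a" by (simp add: mring hom_comm[OF g a])
  finally show "rmat Z a * comp Q f g (src Q a) = comp Q f g (tgt Q a) * rmat X a" by simp
qed (auto simp: comp_def intro!: mult_carrier_mat hom_carrier[OF f] hom_carrier[OF g])


section \<open>Splittings\<close>

lemma mext: fixes A :: "'a::semiring_0 mat"
  shows "A * B = C \<Longrightarrow> dim_col A = dim_row B \<Longrightarrow> dim_col B = dim_row Z \<Longrightarrow> A * (B * Z) = C * Z"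
  by (metis massoc)

definition splits :: "quiver \<Rightarrow> 'k::field rep \<Rightarrow> 'k rep \<Rightarrow> 'k rep \<Rightarrow> 'k rhom \<Rightarrow> 'k rhom \<Rightarrow> 'k rhom \<Rightarrow> 'k rhom \<Rightarrow> bool" where
  "splits Q Y E X \<alpha> \<beta> s r \<longleftrightarrow> (\<forall>v<nv Q. s v \<in> carrier_mat (rdim E v) (rdim X v) \<and> r v \<in> carrier_mat (rdim Y v) (rdim E v) \<and>
     \<beta> v * s v = 1\<^sub>m (rdim X v) \<and> r v * \<alpha> v = 1\<^sub>m (rdim Y v) \<and>
     \<alpha> v * r v + s v * \<beta> v = 1\<^sub>m (rdim E v) \<and> r v * s v = 0\<^sub>m (rdim Y v) (rdim X v) \<and>
     \<beta> v * \<alpha> v = 0\<^sub>m (rdim X v) (rdim Y v))"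

lemma ses_splits:
  assumes "ses Q Y E X \<alpha> \<beta>"
  shows "\<exists>s r. splits Q Y E X \<alpha> \<beta> s r"
proof -
  have "\<forall>v. \<exists>sr. v < nv Q \<longrightarrow> (fst sr \<in> carrier_mat (rdim E v) (rdim X v) \<and> snd sr \<in> carrier_mat (rdim Y v) (rdim E v) \<and>
     \<beta> v * fst sr = 1\<^sub>m (rdim X v) \<and> snd sr * \<alpha> v = 1\<^sub>m (rdim Y v) \<and>
     \<alpha> v * snd sr + fst sr * \<beta> v = 1\<^sub>m (rdim E v) \<and> snd sr * fst sr = 0\<^sub>m (rdim Y v) (rdim X v) \<and>
     \<beta> v * \<alpha> v = 0\<^sub>m (rdim X v) (rdim Y v))"
  proof
    fix v
    show "\<exists>sr. v < nv Q \<longrightarrow> (fst sr \<in> carrier_mat (rdim E v) (rdim X v) \<and> snd sr \<in> carrier_mat (rdim Y v) (rdim E v) \<and>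
     \<beta> v * fst sr = 1\<^sub>m (rdim X v) \<and> snd sr * \<alpha> v = 1\<^sub>m (rdim Y v) \<and>
     \<alpha> v * snd sr + fst sr * \<beta> v = 1\<^sub>m (rdim E v) \<and> snd sr * fst sr = 0\<^sub>m (rdim Y v) (rdim X v) \<and>
     \<beta> v * \<alpha> v = 0\<^sub>m (rdim X v) (rdim Y v))"
    proof (cases "v < nv Q")
      case True
      have a: "\<alpha> v \<in> carrier_mat (rdim E v) (rdim Y v)" and b: "\<beta> v \<in> carrier_mat (rdim X v) (rdim E v)"
        using assms True unfolding ses_def hom_def by auto
      from assms True have c: "(\<forall>x\<in>carrier_vec (rdim Y v). \<alpha> v *\<^sub>v x = 0\<^sub>v (rdim E v) \<longrightarrow> x = 0\<^sub>v (rdim Y v))"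
        "(\<forall>z\<in>carrier_vec (rdim X v). \<exists>y\<in>carrier_vec (rdim E v). \<beta> v *\<^sub>v y = z)"
        "(\<forall>y\<in>carrier_vec (rdim E v).
            \<beta> v *\<^sub>v y = 0\<^sub>v (rdim X v) \<longleftrightarrow> (\<exists>x\<in>carrier_vec (rdim Y v). \<alpha> v *\<^sub>v x = y))"
        unfolding ses_def by auto
      from vertex_split[OF a b c] obtain s r where
        "s \<in> carrier_mat (rdim E v) (rdim X v) \<and> r \<in> carrier_mat (rdim Y v) (rdim E v) \<and> \<beta> v * s = 1\<^sub>m (rdim X v) \<and> r * \<alpha> v = 1\<^sub>m (rdim Y v) \<and>
      \<alpha> v * r + s * \<beta> v = 1\<^sub>m (rdim E v) \<and> r * s = 0\<^sub>m (rdim Y v) (rdim X v) \<and> \<beta> v * \<alpha> v = 0\<^sub>m (rdim X v) (rdim Y v)"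
        by blast
      then show ?thesis by (intro exI[of _ "(s, r)"]) simp
    qed simp
  qed
  from choice[OF this] obtain F where F: "\<And>v. v < nv Q \<Longrightarrow> (fst (F v) \<in> carrier_mat (rdim E v) (rdim X v) \<and> snd (F v) \<in> carrier_mat (rdim Y v) (rdim E v) \<and>
     \<beta> v * fst (F v) = 1\<^sub>m (rdim X v) \<and> snd (F v) * \<alpha> v = 1\<^sub>m (rdim Y v) \<and>
     \<alpha> v * snd (F v) + fst (F v) * \<beta> v = 1\<^sub>m (rdim E v) \<and> snd (F v) * fst (F v) = 0\<^sub>m (rdim Y v) (rdim X v) \<and>
     \<beta> v * \<alpha> v = 0\<^sub>m (rdim X v) (rdim Y v))" by blast
  show ?thesis unfolding splits_def by (rule exI[of _ "\<lambda>v. fst (F v)"], rule exI[of _ "\<lambda>v. snd (F v)"]) (use F in blast)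
qed

definition kap :: "quiver \<Rightarrow> 'k::field rep \<Rightarrow> 'k rhom \<Rightarrow> 'k rhom \<Rightarrow> nat \<Rightarrow> 'k mat" where
  "kap Q E s r a = r (tgt Q a) * rmat E a * s (src Q a)"

lemma ses_dims:
  assumes "ses Q Y E X \<alpha> \<beta>" "v < nv Q"
  shows "dim_row (\<alpha> v) = rdim E v" "dim_col (\<alpha> v) = rdim Y v"
    "dim_row (\<beta> v) = rdim X v" "dim_col (\<beta> v) = rdim E v"
  using assms unfolding ses_def hom_def by auto

lemma splits_dims:
  assumes "splits Q Y E X \<alpha> \<beta> s r" "v < nv Q"
  shows "dim_row (s v) = rdim E v" "dim_col (s v) = rdim X v"
    "dim_row (r v) = rdim Y v" "dim_col (r v) = rdim E v"
  using assms unfolding splits_def by auto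

lemma splits_eqs:
  assumes "splits Q Y E X \<alpha> \<beta> s r" "v < nv Q"
  shows "\<beta> v * s v = 1\<^sub>m (rdim X v)" "r v * \<alpha> v = 1\<^sub>m (rdim Y v)"
     "\<alpha> v * r v + s v * \<beta> v = 1\<^sub>m (rdim E v)" "r v * s v = 0\<^sub>m (rdim Y v) (rdim X v)"
     "\<beta> v * \<alpha> v = 0\<^sub>m (rdim X v) (rdim Y v)"
  using assms unfolding splits_def by auto

lemma splits_eqs_ext:
  assumes sp: "splits Q Y E X \<alpha> \<beta> s r" and ses: "ses Q Y E X \<alpha> \<beta>" and v: "v < nv Q"
  shows "dim_row Z = rdim X v \<Longrightarrow> \<beta> v * (s v * Z) = Z"
    "dim_row Z = rdim Y v \<Longrightarrow> r v * (\<alpha> v * Z) = Z"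
    "dim_row Z = rdim X v \<Longrightarrow> r v * (s v * Z) = 0\<^sub>m (rdim Y v) (dim_col Z)"
    "dim_row Z = rdim Y v \<Longrightarrow> \<beta> v * (\<alpha> v * Z) = 0\<^sub>m (rdim X v) (dim_col Z)"
  using mext[OF splits_eqs(1)[OF sp v], of Z] mext[OF splits_eqs(2)[OF sp v], of Z]
    mext[OF splits_eqs(4)[OF sp v], of Z] mext[OF splits_eqs(5)[OF sp v], of Z]
  by (simp_all add: splits_dims[OF sp v] ses_dims[OF ses v])


lemma hom_comm_ext:
  assumes wf: "wfq Q" and vX: "valid_rep Q X" and vY: "valid_rep Q Y" and f: "f \<in> hom Q X Y"
    and a: "a < length (arr Q)" and Z: "dim_row Z = rdim X (src Q a)"
  shows "rmat Y a * (f (src Q a) * Z) = f (tgt Q a) * (rmat X a * Z)"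
proof -
  note [simp] = wfq_D[OF wf a] hom_dims[OF f] valid_rep_dims[OF vX a] valid_rep_dims[OF vY a]
  have "rmat Y a * (f (src Q a) * Z) = (rmat Y a * f (src Q a)) * Z" using Z by (simp add: mring)
  also have "\<dots> = (f (tgt Q a) * rmat X a) * Z" by (simp add: hom_comm[OF f a])
  also have "\<dots> = f (tgt Q a) * (rmat X a * Z)" using Z by (simp add: mring)
  finally show ?thesis .
qed

locale sext =
  fixes Q :: quiver and Y E X :: "'k::field rep" and \<alpha> \<beta> s r :: "'k rhom"
  assumes wf: "wfq Q" and ses: "ses Q Y E X \<alpha> \<beta>" and sp: "splits Q Y E X \<alpha> \<beta> s r"
begin

lemma vY: "valid_rep Q Y" and vE: "valid_rep Q E" and vX: "valid_rep Q X"
  and ah: "\<alpha> \<in> hom Q Y E" and bh: "\<beta> \<in> hom Q E X"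
  using ses unfolding ses_def by auto

lemmas dims = wfq_D[OF wf] ses_dims[OF ses] splits_dims[OF sp] valid_rep_dims[OF vY]
  valid_rep_dims[OF vE] valid_rep_dims[OF vX]

lemma kap_dims: "a < length (arr Q) \<Longrightarrow> dim_row (kap Q E s r a) = rdim Y (tgt Q a)"
  "a < length (arr Q) \<Longrightarrow> dim_col (kap Q E s r a) = rdim X (src Q a)"
  unfolding kap_def by (simp_all add: dims)

lemma i1: assumes a: "a < length (arr Q)"
  shows "r (tgt Q a) * rmat E a = rmat Y a * r (src Q a) + kap Q E s r a * \<beta> (src Q a)"
proof -
  note [simp] = dims a
  have "r (tgt Q a) * rmat E a = r (tgt Q a) * rmat E a * (\<alpha> (src Q a) * r (src Q a) + s (src Q a) * \<beta> (src Q a))"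
    by (simp add: splits_eqs[OF sp])
  also have "\<dots> = rmat Y a * r (src Q a) + kap Q E s r a * \<beta> (src Q a)"
    by (simp add: mring kap_def hom_comm_ext[OF wf vY vE ah a] splits_eqs_ext[OF sp ses])
  finally show ?thesis .
qed

lemma i2: assumes a: "a < length (arr Q)"
  shows "rmat E a * s (src Q a) = \<alpha> (tgt Q a) * kap Q E s r a + s (tgt Q a) * rmat X a"
proof -
  note [simp] = dims a
  have "rmat E a * s (src Q a) = (\<alpha> (tgt Q a) * r (tgt Q a) + s (tgt Q a) * \<beta> (tgt Q a)) * rmat E a * s (src Q a)"
    by (simp add: splits_eqs[OF sp])
  also have "\<dots> = \<alpha> (tgt Q a) * kap Q E s r a + s (tgt Q a) * rmat X a"
    by (simp add: mring kap_def hom_comm_ext[OF wf vE vX bh a, symmetric] splits_eqs_ext[OF sp ses] splits_eqs(1)[OF sp])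
  finally show ?thesis .
qed


lemma i1_ext: assumes a: "a < length (arr Q)" and Z: "dim_row Z = rdim E (src Q a)"
  shows "r (tgt Q a) * (rmat E a * Z) = rmat Y a * (r (src Q a) * Z) + kap Q E s r a * (\<beta> (src Q a) * Z)"
proof -
  note [simp] = dims a
  have "r (tgt Q a) * (rmat E a * Z) = (r (tgt Q a) * rmat E a) * Z" using Z by (simp add: mring)
  also have "\<dots> = rmat Y a * (r (src Q a) * Z) + kap Q E s r a * (\<beta> (src Q a) * Z)"
    unfolding i1[OF a] using Z by (simp add: mring kap_dims)
  finally show ?thesis .
qed

lemma i2_ext: assumes a: "a < length (arr Q)" and Z: "dim_row Z = rdim X (src Q a)"
  shows "rmat E a * (s (src Q a) * Z) = \<alpha> (tgt Q a) * (kap Q E s r a * Z) + s (tgt Q a) * (rmat X a * Z)"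
proof -
  note [simp] = dims a
  have "rmat E a * (s (src Q a) * Z) = (rmat E a * s (src Q a)) * Z" using Z by (simp add: mring)
  also have "\<dots> = \<alpha> (tgt Q a) * (kap Q E s r a * Z) + s (tgt Q a) * (rmat X a * Z)"
    unfolding i2[OF a] using Z by (simp add: mring kap_dims)
  finally show ?thesis .
qed


end


definition cochain :: "quiver \<Rightarrow> 'k rep \<Rightarrow> 'k rep \<Rightarrow> 'k rhom \<Rightarrow> bool" where
  "cochain Q X Y w \<longleftrightarrow> (\<forall>v<nv Q. w v \<in> carrier_mat (rdim Y v) (rdim X v))"

lemma cochain_dims: "cochain Q X Y w \<Longrightarrow> v < nv Q \<Longrightarrow> dim_row (w v) = rdim Y v"
  "cochain Q X Y w \<Longrightarrow> v < nv Q \<Longrightarrow> dim_col (w v) = rdim X v"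
  unfolding cochain_def by auto

definition phi_of where
  "phi_of Q \<alpha>' a r s' b \<beta> w = (\<lambda>v. if v < nv Q then \<alpha>' v * a v * r v + s' v * b v * \<beta> v + \<alpha>' v * w v * \<beta> v else 0\<^sub>m 0 0)"

lemma HOM_if:
  assumes e: "sext Q Y E X \<alpha> \<beta> s r" and e': "sext Q Y' E' X' \<alpha>' \<beta>' s' r'"
    and a: "a \<in> hom Q Y Y'" and b: "b \<in> hom Q X X'" and w: "cochain Q X Y' w"
    and eq: "\<And>i. i < length (arr Q) \<Longrightarrow> a (tgt Q i) * kap Q E s r i + w (tgt Q i) * rmat X i
               = rmat Y' i * w (src Q i) + kap Q E' s' r' i * b (src Q i)"
  shows "ext_hom Q Y X (E, \<alpha>, \<beta>) Y' X' (E', \<alpha>', \<beta>') a (phi_of Q \<alpha>' a r s' b \<beta> w) b"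
proof -
  interpret e: sext Q Y E X \<alpha> \<beta> s r by (rule e)
  interpret e': sext Q Y' E' X' \<alpha>' \<beta>' s' r' by (rule e')
  note dims[simp] = e.dims e'.dims hom_dims[OF a] hom_dims[OF b] cochain_dims[OF w] e.kap_dims e'.kap_dims
  let ?p = "phi_of Q \<alpha>' a r s' b \<beta> w"
  have php: "?p \<in> hom Q E E'"
  proof (rule homI)
    fix v assume v: "v < nv Q"
    show "?p v \<in> carrier_mat (rdim E' v) (rdim E v)" using v unfolding phi_of_def
      by (intro carrier_matI) simp_all
  next
    fix v assume "\<not> v < nv Q" thus "?p v = 0\<^sub>m 0 0" unfolding phi_of_def by simp
  next
    fix i assume i: "i < length (arr Q)"
    note [simp] = i
    have l: "rmat E' i * ?p (src Q i) = \<alpha>' (tgt Q i) * (a (tgt Q i) * (rmat Y i * r (src Q i))) +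
     (\<alpha>' (tgt Q i) * (kap Q E' s' r' i * (b (src Q i) * \<beta> (src Q i))) +
      s' (tgt Q i) * (b (tgt Q i) * (rmat X i * \<beta> (src Q i)))) +
     \<alpha>' (tgt Q i) * (rmat Y' i * (w (src Q i) * \<beta> (src Q i)))"
      unfolding phi_of_def
      apply (simp add: mring hom_comm_ext[OF e.wf e.vY e'.vY a] hom_comm_ext[OF e.wf e.vX e'.vX b]
        hom_comm_ext[OF e.wf e'.vY e'.vE e'.ah] e'.i2_ext)
      done
    have r: "?p (tgt Q i) * rmat E i = \<alpha>' (tgt Q i) * (a (tgt Q i) * (rmat Y i * r (src Q i))) +
     \<alpha>' (tgt Q i) * (a (tgt Q i) * (kap Q E s r i * \<beta> (src Q i))) +
     s' (tgt Q i) * (b (tgt Q i) * (rmat X i * \<beta> (src Q i))) +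
     \<alpha>' (tgt Q i) * (w (tgt Q i) * (rmat X i * \<beta> (src Q i)))"
      unfolding phi_of_def
      by (simp add: mring hom_comm[OF e.bh i, symmetric] e.i1)
    have "\<alpha>' (tgt Q i) * ((a (tgt Q i) * kap Q E s r i + w (tgt Q i) * rmat X i) * \<beta> (src Q i))
       = \<alpha>' (tgt Q i) * ((rmat Y' i * w (src Q i) + kap Q E' s' r' i * b (src Q i)) * \<beta> (src Q i))"
      by (simp add: eq[OF i])
    hence eq2: "\<alpha>' (tgt Q i) * (a (tgt Q i) * (kap Q E s r i * \<beta> (src Q i))) +
     \<alpha>' (tgt Q i) * (w (tgt Q i) * (rmat X i * \<beta> (src Q i))) =
     \<alpha>' (tgt Q i) * (rmat Y' i * (w (src Q i) * \<beta> (src Q i))) + 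
     \<alpha>' (tgt Q i) * (kap Q E' s' r' i * (b (src Q i) * \<beta> (src Q i)))"
      by (simp add: mring)
    show "rmat E' i * ?p (src Q i) = ?p (tgt Q i) * rmat E i"
      unfolding l r by (rule rearr1[OF _ _ _ _ _ _ eq2]; rule carrier_matI; simp)
  qed
  have c1: "comp Q ?p \<alpha> = comp Q \<alpha>' a" unfolding comp_eq_iff
  proof (intro allI impI)
    fix v assume v: "v < nv Q"
    show "?p v * \<alpha> v = \<alpha>' v * a v" unfolding phi_of_def using v
      by (simp add: mring splits_eqs[OF e.sp] splits_eqs_ext[OF e.sp e.ses])
  qed
  have c2: "comp Q \<beta>' ?p = comp Q b \<beta>" unfolding comp_eq_iff
  proof (intro allI impI)
    fix v assume v: "v < nv Q"
    show "\<beta>' v * ?p v = b v * \<beta> v" unfolding phi_of_def using v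
      by (simp add: mring splits_eqs[OF e'.sp] splits_eqs_ext[OF e'.sp e'.ses])
  qed
  show ?thesis unfolding ext_hom_def using a b php c1 c2 by simp
qed


lemma HOM_only_if:
  assumes e: "sext Q Y E X \<alpha> \<beta> s r" and e': "sext Q Y' E' X' \<alpha>' \<beta>' s' r'"
    and h: "ext_hom Q Y X (E, \<alpha>, \<beta>) Y' X' (E', \<alpha>', \<beta>') a \<phi> b"
  shows "\<exists>w. cochain Q X Y' w \<and> (\<forall>i < length (arr Q). a (tgt Q i) * kap Q E s r i + w (tgt Q i) * rmat X i
               = rmat Y' i * w (src Q i) + kap Q E' s' r' i * b (src Q i))"
proof -
  interpret e: sext Q Y E X \<alpha> \<beta> s r by (rule e)
  interpret e': sext Q Y' E' X' \<alpha>' \<beta>' s' r' by (rule e')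
  have a: "a \<in> hom Q Y Y'" and b: "b \<in> hom Q X X'" and ph: "\<phi> \<in> hom Q E E'"
    and c1: "comp Q \<phi> \<alpha> = comp Q \<alpha>' a" and c2: "comp Q \<beta>' \<phi> = comp Q b \<beta>"
    using h unfolding ext_hom_def by auto
  note dims[simp] = e.dims e'.dims hom_dims[OF a] hom_dims[OF b] hom_dims[OF ph] e.kap_dims e'.kap_dims
  have c1v: "\<phi> v * (\<alpha> v * Z) = \<alpha>' v * (a v * Z)" if v: "v < nv Q" and Z: "dim_row Z = rdim Y v" for v Z
  proof -
    have "\<phi> v * (\<alpha> v * Z) = (\<phi> v * \<alpha> v) * Z" using v Z by (simp add: mring)
    also have "\<dots> = (\<alpha>' v * a v) * Z" using c1 v unfolding comp_eq_iff by simp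
    also have "\<dots> = \<alpha>' v * (a v * Z)" using v Z by (simp add: mring)
    finally show ?thesis .
  qed
  have c2v: "\<beta>' v * (\<phi> v * Z) = b v * (\<beta> v * Z)" if v: "v < nv Q" and Z: "dim_row Z = rdim E v" for v Z
  proof -
    have "\<beta>' v * (\<phi> v * Z) = (\<beta>' v * \<phi> v) * Z" using v Z by (simp add: mring)
    also have "\<dots> = (b v * \<beta> v) * Z" using c2 v unfolding comp_eq_iff by simp
    also have "\<dots> = b v * (\<beta> v * Z)" using v Z by (simp add: mring)
    finally show ?thesis .
  qed
  define w where "w = (\<lambda>v. r' v * \<phi> v * s v)"
  have w: "cochain Q X Y' w" unfolding cochain_def w_def by (auto intro!: carrier_matI)
  have "\<forall>i < length (arr Q). a (tgt Q i) * kap Q E s r i + w (tgt Q i) * rmat X i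
               = rmat Y' i * w (src Q i) + kap Q E' s' r' i * b (src Q i)"
  proof (intro allI impI)
    fix i assume i: "i < length (arr Q)"
    note [simp] = i
    have "r' (tgt Q i) * (rmat E' i * (\<phi> (src Q i) * s (src Q i))) = a (tgt Q i) * kap Q E s r i + w (tgt Q i) * rmat X i"
      unfolding w_def
      by (simp add: mring hom_comm_ext[OF e.wf e.vE e'.vE ph] e.i2 c1v splits_eqs_ext[OF e'.sp e'.ses])
    moreover have "r' (tgt Q i) * (rmat E' i * (\<phi> (src Q i) * s (src Q i))) = rmat Y' i * w (src Q i) + kap Q E' s' r' i * b (src Q i)"
      unfolding w_def
      by (simp add: mring e'.i1_ext c2v splits_eqs_ext[OF e.sp e.ses] splits_eqs[OF e.sp])
    ultimately show "a (tgt Q i) * kap Q E s r i + w (tgt Q i) * rmat X i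
               = rmat Y' i * w (src Q i) + kap Q E' s' r' i * b (src Q i)" by simp
  qed
  with w show ?thesis by blast
qed


section \<open>Coboundary relation\<close>

lemma lin_sym: fixes A :: "'a::ab_group_add mat"
  assumes "A \<in> carrier_mat n m" "B \<in> carrier_mat n m" "C \<in> carrier_mat n m" "D \<in> carrier_mat n m"
    and h: "A + B = C + D"
  shows "D + (- B) = (- C) + A"
proof (rule eq_matI)
  fix i j assume ij: "i < dim_row (- C + A)" "j < dim_col (- C + A)"
  note [simp] = carrier_matD[OF assms(1)] carrier_matD[OF assms(2)] carrier_matD[OF assms(3)] carrier_matD[OF assms(4)]
  have ij': "i < n" "j < m" using ij by simp_all
  have "A $$ (i, j) + B $$ (i, j) = (A + B) $$ (i, j)" using ij' by simp
  also have "\<dots> = (C + D) $$ (i, j)" using h by simp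
  also have "\<dots> = C $$ (i, j) + D $$ (i, j)" using ij' by simp
  finally have e: "A $$ (i, j) + B $$ (i, j) = C $$ (i, j) + D $$ (i, j)" .
  have "D $$ (i, j) - B $$ (i, j) = A $$ (i, j) - C $$ (i, j)"
    using e by (simp add: algebra_simps eq_diff_eq diff_eq_eq)
  then show "(D + - B) $$ (i, j) = (- C + A) $$ (i, j)" using ij' by (simp add: algebra_simps)
qed (use assms in simp_all)

lemma ab_lin: fixes a :: "'a::ab_semigroup_add"
  assumes "a + b = c + d" "d + b' = c' + f" shows "a + (b + b') = (c + c') + f"
proof -
  have "a + (b + b') = (a + b) + b'" by (simp add: add.assoc)
  also have "\<dots> = c + (d + b')" using assms(1) by (simp add: add.assoc)
  also have "\<dots> = (c + c') + f" using assms(2) by (simp add: add.assoc)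
  finally show ?thesis .
qed

lemma lin_trans: fixes A :: "'a::ab_group_add mat"
  assumes "A \<in> carrier_mat n m" "B \<in> carrier_mat n m" "C \<in> carrier_mat n m" "D \<in> carrier_mat n m"
    "B' \<in> carrier_mat n m" "C' \<in> carrier_mat n m" "F \<in> carrier_mat n m"
    and h: "A + B = C + D" and h': "D + B' = C' + F"
  shows "A + (B + B') = (C + C') + F"
proof (rule eq_matI)
  fix i j assume ij: "i < dim_row (C + C' + F)" "j < dim_col (C + C' + F)"
  note [simp] = carrier_matD[OF assms(1)] carrier_matD[OF assms(2)] carrier_matD[OF assms(3)] carrier_matD[OF assms(4)]
    carrier_matD[OF assms(5)] carrier_matD[OF assms(6)] carrier_matD[OF assms(7)]
  have ij': "i < n" "j < m" using ij by simp_all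
  have "A $$ (i, j) + B $$ (i, j) = (A + B) $$ (i, j)" using ij' by simp
  also have "\<dots> = (C + D) $$ (i, j)" using h by simp
  also have "\<dots> = C $$ (i, j) + D $$ (i, j)" using ij' by simp
  finally have e: "A $$ (i, j) + B $$ (i, j) = C $$ (i, j) + D $$ (i, j)" .
  have "D $$ (i, j) + B' $$ (i, j) = (D + B') $$ (i, j)" using ij' by simp
  also have "\<dots> = (C' + F) $$ (i, j)" using h' by simp
  also have "\<dots> = C' $$ (i, j) + F $$ (i, j)" using ij' by simp
  finally have e': "D $$ (i, j) + B' $$ (i, j) = C' $$ (i, j) + F $$ (i, j)" .
  have "A $$ (i, j) + (B $$ (i, j) + B' $$ (i, j)) = (C $$ (i, j) + C' $$ (i, j)) + F $$ (i, j)"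
    using ab_lin[OF e e'] .
  then show "(A + (B + B')) $$ (i, j) = (C + C' + F) $$ (i, j)" using ij' by simp
qed (use assms in simp_all)


lemma lin_gen2: fixes A :: "'a::comm_ring_1 mat"
  assumes c: "\<And>X. X \<in> set Ms \<Longrightarrow> X \<in> carrier_mat n m"
    and L: "L \<in> carrier_mat n m" and R: "R \<in> carrier_mat n m"
    and ent: "\<And>i j. i < n \<Longrightarrow> j < m \<Longrightarrow> L $$ (i, j) = R $$ (i, j)"
  shows "L = R"
  by (rule eq_matI) (use L R ent in auto)

lemma lin_sw2: fixes A :: "'a::comm_ring_1 mat"
  assumes "A \<in> carrier_mat n m" "B \<in> carrier_mat n m" "C \<in> carrier_mat n m" "D \<in> carrier_mat n m"
    and h: "B + A = C + D"
  shows "A + (- D) = (- B) + C"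
proof (rule eq_matI)
  fix i j assume ij: "i < dim_row (- B + C)" "j < dim_col (- B + C)"
  note [simp] = carrier_matD[OF assms(1)] carrier_matD[OF assms(2)] carrier_matD[OF assms(3)] carrier_matD[OF assms(4)]
  have ij': "i < n" "j < m" using ij by simp_all
  have e: "B $$ (i, j) + A $$ (i, j) = C $$ (i, j) + D $$ (i, j)" using arg_cong[OF h, of "\<lambda>X. X $$ (i, j)"] ij' by simp
  have "A $$ (i, j) - D $$ (i, j) = C $$ (i, j) - B $$ (i, j)" using e by (simp add: algebra_simps eq_diff_eq diff_eq_eq)
  then show "(A + - D) $$ (i, j) = (- B + C) $$ (i, j)" using ij' by simp
qed (use assms in simp_all)

lemma lin_F4: fixes A :: "'a::comm_ring_1 mat"
  assumes "A \<in> carrier_mat n m" "B \<in> carrier_mat n m" "C \<in> carrier_mat n m" "D \<in> carrier_mat n m" "E \<in> carrier_mat n m"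
    and h: "A + E = C + D"
  shows "D + (B - E) = (A + B - C) + 0\<^sub>m n m"
proof (rule eq_matI)
  fix i j assume ij: "i < dim_row (A + B - C + 0\<^sub>m n m)" "j < dim_col (A + B - C + 0\<^sub>m n m)"
  note [simp] = carrier_matD[OF assms(1)] carrier_matD[OF assms(2)] carrier_matD[OF assms(3)] carrier_matD[OF assms(4)]
    carrier_matD[OF assms(5)]
  have ij': "i < n" "j < m" using ij by simp_all
  have e: "A $$ (i, j) + E $$ (i, j) = C $$ (i, j) + D $$ (i, j)" using arg_cong[OF h, of "\<lambda>X. X $$ (i, j)"] ij' by simp
  have "D $$ (i, j) + (B $$ (i, j) - E $$ (i, j)) = A $$ (i, j) + B $$ (i, j) - C $$ (i, j)" using e by (simp add: algebra_simps eq_diff_eq diff_eq_eq)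
  then show "(D + (B - E)) $$ (i, j) = (A + B - C + 0\<^sub>m n m) $$ (i, j)" using ij' by simp
qed (use assms in simp_all)

lemma lin_F5a: fixes A :: "'a::comm_ring_1 mat"
  assumes "A \<in> carrier_mat n m" "B \<in> carrier_mat n m" "C \<in> carrier_mat n m"
    and h: "A + B = C + 0\<^sub>m n m"
  shows "A + B - C = 0\<^sub>m n m"
proof (rule eq_matI)
  fix i j assume ij: "i < dim_row (0\<^sub>m n m :: 'a mat)" "j < dim_col (0\<^sub>m n m :: 'a mat)"
  note [simp] = carrier_matD[OF assms(1)] carrier_matD[OF assms(2)] carrier_matD[OF assms(3)]
  have ij': "i < n" "j < m" using ij by simp_all
  have e: "A $$ (i, j) + B $$ (i, j) = C $$ (i, j)" using arg_cong[OF h, of "\<lambda>X. X $$ (i, j)"] ij' by simp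
  then show "(A + B - C) $$ (i, j) = (0\<^sub>m n m :: 'a mat) $$ (i, j)" using ij' by simp
qed (use assms in simp_all)

lemma lin_F5b: fixes A :: "'a::comm_ring_1 mat"
  assumes "A \<in> carrier_mat n m" "B \<in> carrier_mat n m" "C \<in> carrier_mat n m"
  shows "A + B = C + (A + B - C)"
proof (rule eq_matI)
  fix i j assume ij: "i < dim_row (C + (A + B - C))" "j < dim_col (C + (A + B - C))"
  note [simp] = carrier_matD[OF assms(1)] carrier_matD[OF assms(2)] carrier_matD[OF assms(3)]
  have ij': "i < n" "j < m" using ij by simp_all
  then show "(A + B) $$ (i, j) = (C + (A + B - C)) $$ (i, j)" by simp
qed (use assms in simp_all)

lemma lin_F5c: fixes A :: "'a::comm_ring_1 mat"
  assumes "A \<in> carrier_mat n m" "B \<in> carrier_mat n m" "C \<in> carrier_mat n m"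
    and h: "Z + C = A + B" and Z: "Z = 0\<^sub>m n m"
  shows "B + (- C) = (- A) + 0\<^sub>m n m"
proof (rule eq_matI)
  fix i j assume ij: "i < dim_row (- A + 0\<^sub>m n m)" "j < dim_col (- A + 0\<^sub>m n m)"
  note [simp] = carrier_matD[OF assms(1)] carrier_matD[OF assms(2)] carrier_matD[OF assms(3)]
  have ij': "i < n" "j < m" using ij by simp_all
  have e: "C $$ (i, j) = A $$ (i, j) + B $$ (i, j)" using arg_cong[OF h, of "\<lambda>X. X $$ (i, j)"] ij' Z by simp
  have "B $$ (i, j) - C $$ (i, j) = - A $$ (i, j)" using e by (simp add: algebra_simps eq_diff_eq diff_eq_eq)
  then show "(B + - C) $$ (i, j) = (- A + 0\<^sub>m n m) $$ (i, j)" using ij' by simp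
qed (use assms in simp_all)

definition cocyc :: "quiver \<Rightarrow> 'k rep \<Rightarrow> 'k rep \<Rightarrow> (nat \<Rightarrow> 'k mat) \<Rightarrow> bool" where
  "cocyc Q X Y h \<longleftrightarrow> (\<forall>i<length (arr Q). h i \<in> carrier_mat (rdim Y (tgt Q i)) (rdim X (src Q i)))"

lemma cocyc_dims: "cocyc Q X Y h \<Longrightarrow> i < length (arr Q) \<Longrightarrow> dim_row (h i) = rdim Y (tgt Q i)"
  "cocyc Q X Y h \<Longrightarrow> i < length (arr Q) \<Longrightarrow> dim_col (h i) = rdim X (src Q i)"
  unfolding cocyc_def by auto

definition cob :: "quiver \<Rightarrow> 'k::field rep \<Rightarrow> 'k rep \<Rightarrow> (nat \<Rightarrow> 'k mat) \<Rightarrow> (nat \<Rightarrow> 'k mat) \<Rightarrow> bool" where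
  "cob Q X Y h h' \<longleftrightarrow> (\<exists>w. cochain Q X Y w \<and>
     (\<forall>i<length (arr Q). h i + w (tgt Q i) * rmat X i = rmat Y i * w (src Q i) + h' i))"

context
  fixes Q :: quiver and X Y :: "'k::field rep"
  assumes wf: "wfq Q" and vX: "valid_rep Q X" and vY: "valid_rep Q Y"
begin

lemmas dd = wfq_D[OF wf] valid_rep_dims[OF vX] valid_rep_dims[OF vY]

lemma cob_refl: "cocyc Q X Y h \<Longrightarrow> cob Q X Y h h"
  unfolding cob_def
proof (intro exI[of _ "\<lambda>v. 0\<^sub>m (rdim Y v) (rdim X v)"] conjI allI impI)
  fix i assume c: "cocyc Q X Y h" and i: "i < length (arr Q)"
  note [simp] = dd i cocyc_dims[OF c]
  show "h i + 0\<^sub>m (rdim Y (tgt Q i)) (rdim X (tgt Q i)) * rmat X i =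
         rmat Y i * 0\<^sub>m (rdim Y (src Q i)) (rdim X (src Q i)) + h i"
    by (simp add: mring)
qed (simp add: cochain_def)

lemma cob_sym: assumes "cocyc Q X Y h" "cocyc Q X Y h'" "cob Q X Y h h'" shows "cob Q X Y h' h"
proof -
  from assms(3) obtain w where w: "cochain Q X Y w" and
    eq: "\<And>i. i<length (arr Q) \<Longrightarrow> h i + w (tgt Q i) * rmat X i = rmat Y i * w (src Q i) + h' i"
    unfolding cob_def by blast
  show ?thesis unfolding cob_def
  proof (intro exI[of _ "\<lambda>v. - w v"] conjI allI impI)
    show "cochain Q X Y (\<lambda>v. - w v)" using w unfolding cochain_def by simp
    fix i assume i: "i < length (arr Q)"
    note [simp] = dd i cocyc_dims[OF assms(1)] cocyc_dims[OF assms(2)] cochain_dims[OF w]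
    have "h' i + - (w (tgt Q i) * rmat X i) = - (rmat Y i * w (src Q i)) + h i"
      by (rule lin_sym[OF _ _ _ _ eq[OF i]]; rule carrier_matI; simp)
    thus "h' i + - w (tgt Q i) * rmat X i = rmat Y i * - w (src Q i) + h i" by simp
  qed
qed

lemma cob_trans: assumes "cocyc Q X Y h" "cocyc Q X Y h'" "cocyc Q X Y h''" "cob Q X Y h h'" "cob Q X Y h' h''"
  shows "cob Q X Y h h''"
proof -
  from assms(4) obtain w where w: "cochain Q X Y w" and
    eq: "\<And>i. i<length (arr Q) \<Longrightarrow> h i + w (tgt Q i) * rmat X i = rmat Y i * w (src Q i) + h' i"
    unfolding cob_def by blast
  from assms(5) obtain w' where w': "cochain Q X Y w'" and
    eq': "\<And>i. i<length (arr Q) \<Longrightarrow> h' i + w' (tgt Q i) * rmat X i = rmat Y i * w' (src Q i) + h'' i"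
    unfolding cob_def by blast
  show ?thesis unfolding cob_def
  proof (intro exI[of _ "\<lambda>v. w v + w' v"] conjI allI impI)
    show "cochain Q X Y (\<lambda>v. w v + w' v)" using w w' unfolding cochain_def by simp
    fix i assume i: "i < length (arr Q)"
    note [simp] = dd i cocyc_dims[OF assms(1)] cocyc_dims[OF assms(2)] cocyc_dims[OF assms(3)]
      cochain_dims[OF w] cochain_dims[OF w']
    have "h i + (w (tgt Q i) * rmat X i + w' (tgt Q i) * rmat X i) =
      (rmat Y i * w (src Q i) + rmat Y i * w' (src Q i)) + h'' i"
      by (rule lin_trans[OF _ _ _ _ _ _ _ eq[OF i] eq'[OF i]]; rule carrier_matI; simp)
    thus "h i + (w (tgt Q i) + w' (tgt Q i)) * rmat X i = rmat Y i * (w (src Q i) + w' (src Q i)) + h'' i"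
      by (simp add: mring)
  qed
qed

end


section \<open>Canonical cocycles of extensions\<close>

lemma idh_hom: assumes "wfq Q" "valid_rep Q X" shows "idh Q X \<in> hom Q X X"
proof (rule homI)
  fix a assume a: "a < length (arr Q)"
  note [simp] = wfq_D[OF assms(1) a] valid_rep_dims[OF assms(2) a]
  show "rmat X a * idh Q X (src Q a) = idh Q X (tgt Q a) * rmat X a" unfolding idh_def by simp
qed (auto simp: idh_def)

lemma idh_apply: "v < nv Q \<Longrightarrow> idh Q X v = 1\<^sub>m (rdim X v)" unfolding idh_def by simp

definition splE :: "quiver \<Rightarrow> 'k::field rep \<Rightarrow> 'k rep \<Rightarrow> 'k rep \<Rightarrow> 'k rhom \<Rightarrow> 'k rhom \<Rightarrow> 'k rhom \<times> 'k rhom" where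
  "splE Q Y E X \<alpha> \<beta> = (SOME sr. splits Q Y E X \<alpha> \<beta> (fst sr) (snd sr))"

definition kapE :: "quiver \<Rightarrow> 'k::field rep \<Rightarrow> 'k rep \<Rightarrow> 'k ext \<Rightarrow> nat \<Rightarrow> 'k mat" where
  "kapE Q X Y e = (case e of (E, \<alpha>, \<beta>) \<Rightarrow> kap Q E (fst (splE Q Y E X \<alpha> \<beta>)) (snd (splE Q Y E X \<alpha> \<beta>)))"

lemma ext_of_sext:
  assumes "wfq Q" "ext_of Q X Y (E, \<alpha>, \<beta>)"
  shows "sext Q Y E X \<alpha> \<beta> (fst (splE Q Y E X \<alpha> \<beta>)) (snd (splE Q Y E X \<alpha> \<beta>))"
proof -
  have ses: "ses Q Y E X \<alpha> \<beta>" using assms(2) unfolding ext_of_def by simp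
  from ses_splits[OF ses] obtain s r where "splits Q Y E X \<alpha> \<beta> s r" by blast
  hence "splits Q Y E X \<alpha> \<beta> (fst (splE Q Y E X \<alpha> \<beta>)) (snd (splE Q Y E X \<alpha> \<beta>))"
    unfolding splE_def by (metis (mono_tags, lifting) fst_conv snd_conv someI)
  thus ?thesis using ses assms(1) by (simp add: sext_def)
qed

lemma kapE_cocyc: assumes "wfq Q" "ext_of Q X Y e" shows "cocyc Q X Y (kapE Q X Y e)"
proof -
  obtain E \<alpha> \<beta> where e: "e = (E, \<alpha>, \<beta>)" by (cases e) auto
  interpret sext Q Y E X \<alpha> \<beta> "fst (splE Q Y E X \<alpha> \<beta>)" "snd (splE Q Y E X \<alpha> \<beta>)"
    using ext_of_sext assms e by blast
  show ?thesis unfolding cocyc_def kapE_def e using kap_dims by (auto intro!: carrier_matI)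
qed

lemma ext_of_valid: "ext_of Q X Y e \<Longrightarrow> valid_rep Q X \<and> valid_rep Q Y"
  unfolding ext_of_def ses_def by (cases e) auto

lemma Rel_iff:
  assumes wf: "wfq Q" and e: "ext_of Q X Y e" and e': "ext_of Q X Y e'"
  shows "(\<exists>\<phi>. ext_hom Q Y X e Y X e' (idh Q Y) \<phi> (idh Q X)) \<longleftrightarrow> cob Q X Y (kapE Q X Y e) (kapE Q X Y e')"
proof -
  obtain E \<alpha> \<beta> where E: "e = (E, \<alpha>, \<beta>)" by (cases e) auto
  obtain E' \<alpha>' \<beta>' where E': "e' = (E', \<alpha>', \<beta>')" by (cases e') auto
  let ?s = "fst (splE Q Y E X \<alpha> \<beta>)" and ?r = "snd (splE Q Y E X \<alpha> \<beta>)"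
  let ?s' = "fst (splE Q Y E' X \<alpha>' \<beta>')" and ?r' = "snd (splE Q Y E' X \<alpha>' \<beta>')"
  have se: "sext Q Y E X \<alpha> \<beta> ?s ?r" using ext_of_sext wf e E by blast
  have se': "sext Q Y E' X \<alpha>' \<beta>' ?s' ?r'" using ext_of_sext wf e' E' by blast
  interpret a: sext Q Y E X \<alpha> \<beta> ?s ?r by (rule se)
  interpret b: sext Q Y E' X \<alpha>' \<beta>' ?s' ?r' by (rule se')
  have iY: "idh Q Y \<in> hom Q Y Y" and iX: "idh Q X \<in> hom Q X X" using idh_hom wf a.vY a.vX by blast+
  have eqv: "(idh Q Y (tgt Q i) * kap Q E ?s ?r i + w (tgt Q i) * rmat X i
               = rmat Y i * w (src Q i) + kap Q E' ?s' ?r' i * idh Q X (src Q i)) \<longleftrightarrow>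
             (kap Q E ?s ?r i + w (tgt Q i) * rmat X i = rmat Y i * w (src Q i) + kap Q E' ?s' ?r' i)"
    if i: "i < length (arr Q)" for i w
    using i by (simp add: idh_apply a.dims a.kap_dims b.kap_dims)
  show ?thesis
  proof
    assume "\<exists>\<phi>. ext_hom Q Y X e Y X e' (idh Q Y) \<phi> (idh Q X)"
    then obtain \<phi> where "ext_hom Q Y X (E, \<alpha>, \<beta>) Y X (E', \<alpha>', \<beta>') (idh Q Y) \<phi> (idh Q X)" using E E' by blast
    from HOM_only_if[OF se se' this] eqv show "cob Q X Y (kapE Q X Y e) (kapE Q X Y e')"
      unfolding cob_def kapE_def E E' by auto
  next
    assume "cob Q X Y (kapE Q X Y e) (kapE Q X Y e')"
    then obtain w where w: "cochain Q X Y w" and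
      eq: "\<And>i. i < length (arr Q) \<Longrightarrow> kap Q E ?s ?r i + w (tgt Q i) * rmat X i = rmat Y i * w (src Q i) + kap Q E' ?s' ?r' i"
      unfolding cob_def kapE_def E E' by auto
    from HOM_if[OF se se' iY iX w] eq eqv show "\<exists>\<phi>. ext_hom Q Y X e Y X e' (idh Q Y) \<phi> (idh Q X)"
      unfolding E E' by blast
  qed
qed

definition Ccls :: "quiver \<Rightarrow> 'k::field rep \<Rightarrow> 'k rep \<Rightarrow> (nat \<Rightarrow> 'k mat) \<Rightarrow> 'k ext set" where
  "Ccls Q X Y h = {e'. ext_of Q X Y e' \<and> cob Q X Y h (kapE Q X Y e')}"

lemma cls_char: assumes "wfq Q" "ext_of Q X Y e" shows "ext_cls Q X Y e = Ccls Q X Y (kapE Q X Y e)"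
  unfolding ext_cls_def Ccls_def using Rel_iff[OF assms(1,2)] by blast


definition zc :: "quiver \<Rightarrow> 'k::field rep \<Rightarrow> 'k rep \<Rightarrow> nat \<Rightarrow> 'k mat" where
  "zc Q X Y = (\<lambda>i. 0\<^sub>m (rdim Y (tgt Q i)) (rdim X (src Q i)))"

lemma zc_cocyc: "cocyc Q X Y (zc Q X Y)" unfolding cocyc_def zc_def by simp

lemma lin_split1: fixes A :: "'a::ab_group_add mat"
  assumes "A \<in> carrier_mat n m" "B \<in> carrier_mat n m" "C \<in> carrier_mat n m" and h: "A + B = C"
  shows "B + (- C) = (- A) + 0\<^sub>m n m"
proof (rule eq_matI)
  fix i j assume ij: "i < dim_row (- A + 0\<^sub>m n m)" "j < dim_col (- A + 0\<^sub>m n m)"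
  note [simp] = carrier_matD[OF assms(1)] carrier_matD[OF assms(2)] carrier_matD[OF assms(3)]
  have ij': "i < n" "j < m" using ij by simp_all
  have "A $$ (i, j) + B $$ (i, j) = (A + B) $$ (i, j)" using ij' by simp
  also have "\<dots> = C $$ (i, j)" using h by simp
  finally have e: "A $$ (i, j) + B $$ (i, j) = C $$ (i, j)" .
  have "B $$ (i, j) + - C $$ (i, j) = - A $$ (i, j)" unfolding e[symmetric] by (simp add: algebra_simps)
  then show "(B + - C) $$ (i, j) = (- A + 0\<^sub>m n m) $$ (i, j)" using ij' by simp
qed (use assms in simp_all)

lemma lin_split2: fixes A :: "'a::ab_group_add mat"
  assumes "A \<in> carrier_mat n m" "B \<in> carrier_mat n m" "C \<in> carrier_mat n m" "P \<in> carrier_mat n m"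
    and h: "P = A + C"
  shows "(A + B) - P = B - C"
proof (rule eq_matI)
  fix i j assume ij: "i < dim_row (B - C)" "j < dim_col (B - C)"
  note [simp] = carrier_matD[OF assms(1)] carrier_matD[OF assms(2)] carrier_matD[OF assms(3)] carrier_matD[OF assms(4)]
  have ij': "i < n" "j < m" using ij by simp_all
  have "P $$ (i, j) = A $$ (i, j) + C $$ (i, j)" using h ij' by simp
  then show "(A + B - P) $$ (i, j) = (B - C) $$ (i, j)" using ij' by (simp add: algebra_simps)
qed (use assms in simp_all)

lemma split_iff:
  assumes wf: "wfq Q" and e: "ext_of Q X Y (E, \<alpha>, \<beta>)"
  shows "(\<exists>\<sigma>\<in>hom Q X E. comp Q \<beta> \<sigma> = idh Q X) \<longleftrightarrow> cob Q X Y (kapE Q X Y (E, \<alpha>, \<beta>)) (zc Q X Y)"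
proof -
  let ?s = "fst (splE Q Y E X \<alpha> \<beta>)" and ?r = "snd (splE Q Y E X \<alpha> \<beta>)"
  have se: "sext Q Y E X \<alpha> \<beta> ?s ?r" using ext_of_sext wf e by blast
  interpret a: sext Q Y E X \<alpha> \<beta> ?s ?r by (rule se)
  note [simp] = a.dims a.kap_dims
  have kE: "kapE Q X Y (E, \<alpha>, \<beta>) = kap Q E ?s ?r" unfolding kapE_def by simp
  show ?thesis unfolding kE
  proof
    assume "\<exists>\<sigma>\<in>hom Q X E. comp Q \<beta> \<sigma> = idh Q X"
    then obtain \<sigma> where sh: "\<sigma> \<in> hom Q X E" and bs: "comp Q \<beta> \<sigma> = idh Q X" by blast
    note [simp] = hom_dims[OF sh]
    have bsv: "\<beta> v * \<sigma> v = 1\<^sub>m (rdim X v)" if "v < nv Q" for v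
      using fun_cong[OF bs, of v] that by (simp add: comp_apply idh_apply)
    show "cob Q X Y (kap Q E ?s ?r) (zc Q X Y)" unfolding cob_def
    proof (intro exI[of _ "\<lambda>v. - (?r v * \<sigma> v)"] conjI allI impI)
      show "cochain Q X Y (\<lambda>v. - (?r v * \<sigma> v))" unfolding cochain_def by (auto intro!: carrier_matI)
      fix i assume i: "i < length (arr Q)"
      note [simp] = i
      have "?r (tgt Q i) * (rmat E i * \<sigma> (src Q i)) = ?r (tgt Q i) * (\<sigma> (tgt Q i) * rmat X i)"
        by (simp add: hom_comm[OF sh i])
      hence H: "rmat Y i * (?r (src Q i) * \<sigma> (src Q i)) + kap Q E ?s ?r i = (?r (tgt Q i) * \<sigma> (tgt Q i)) * rmat X i"
        by (simp add: a.i1_ext bsv mring)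
      have "kap Q E ?s ?r i + - ((?r (tgt Q i) * \<sigma> (tgt Q i)) * rmat X i) =
        - (rmat Y i * (?r (src Q i) * \<sigma> (src Q i))) + 0\<^sub>m (rdim Y (tgt Q i)) (rdim X (src Q i))"
        by (rule lin_split1[OF _ _ _ H]; rule carrier_matI; simp)
      thus "kap Q E ?s ?r i + - (?r (tgt Q i) * \<sigma> (tgt Q i)) * rmat X i =
        rmat Y i * - (?r (src Q i) * \<sigma> (src Q i)) + zc Q X Y i"
        unfolding zc_def by simp
    qed
  next
    assume "cob Q X Y (kap Q E ?s ?r) (zc Q X Y)"
    then obtain w where w: "cochain Q X Y w" and
      eq: "\<And>i. i < length (arr Q) \<Longrightarrow> kap Q E ?s ?r i + w (tgt Q i) * rmat X i = rmat Y i * w (src Q i) + zc Q X Y i"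
      unfolding cob_def by blast
    note [simp] = cochain_dims[OF w]
    define \<sigma> where "\<sigma> = (\<lambda>v. if v < nv Q then ?s v - \<alpha> v * w v else 0\<^sub>m 0 0)"
    have sh: "\<sigma> \<in> hom Q X E"
    proof (rule homI)
      fix i assume i: "i < length (arr Q)"
      note [simp] = i
      have eq': "rmat Y i * w (src Q i) = kap Q E ?s ?r i + w (tgt Q i) * rmat X i"
        using eq[OF i] by (simp add: zc_def mring)
      have P: "\<alpha> (tgt Q i) * (rmat Y i * w (src Q i)) = \<alpha> (tgt Q i) * kap Q E ?s ?r i + \<alpha> (tgt Q i) * (w (tgt Q i) * rmat X i)"
        unfolding eq' by (simp add: mring)
      have "rmat E i * \<sigma> (src Q i) = (\<alpha> (tgt Q i) * kap Q E ?s ?r i + ?s (tgt Q i) * rmat X i) - \<alpha> (tgt Q i) * (rmat Y i * w (src Q i))"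
        unfolding \<sigma>_def by (simp add: mring a.i2 hom_comm_ext[OF a.wf a.vY a.vE a.ah])
      also have "\<dots> = ?s (tgt Q i) * rmat X i - \<alpha> (tgt Q i) * (w (tgt Q i) * rmat X i)"
        by (rule lin_split2[OF _ _ _ _ P]; rule carrier_matI; simp)
      also have "\<dots> = \<sigma> (tgt Q i) * rmat X i" unfolding \<sigma>_def by (simp add: mring)
      finally show "rmat E i * \<sigma> (src Q i) = \<sigma> (tgt Q i) * rmat X i" .
    qed (auto simp: \<sigma>_def intro!: carrier_matI)
    have "comp Q \<beta> \<sigma> = idh Q X"
    proof
      fix v show "comp Q \<beta> \<sigma> v = idh Q X v"
        by (cases "v < nv Q") (simp_all add: comp_def idh_def \<sigma>_def mring splits_eqs[OF a.sp] splits_eqs_ext[OF a.sp a.ses])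
    qed
    with sh show "\<exists>\<sigma>\<in>hom Q X E. comp Q \<beta> \<sigma> = idh Q X" by blast
  qed
qed

lemma split_cls_eq: fixes X Y :: "'k::field rep" assumes "wfq Q" shows "split_cls Q X Y = {e. ext_of Q X Y e \<and> cob Q X Y (kapE Q X Y e) (zc Q X Y)}"
proof (rule Set.set_eqI)
  fix e :: "'k ext"
  obtain E \<alpha> \<beta> where E: "e = (E, \<alpha>, \<beta>)" by (cases e) auto
  show "e \<in> split_cls Q X Y \<longleftrightarrow> e \<in> {e. ext_of Q X Y e \<and> cob Q X Y (kapE Q X Y e) (zc Q X Y)}"
    unfolding split_cls_def E using split_iff[OF assms, of X Y E \<alpha> \<beta>] by auto
qed


section \<open>Biproduct matrices\<close>

definition bi1 :: "nat \<Rightarrow> nat \<Rightarrow> 'a::semiring_1 mat" where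
  "bi1 n1 n2 = mat (n1 + n2) n1 (\<lambda>(i, j). if i = j then 1 else 0)"
definition bi2 :: "nat \<Rightarrow> nat \<Rightarrow> 'a::semiring_1 mat" where
  "bi2 n1 n2 = mat (n1 + n2) n2 (\<lambda>(i, j). if i = j + n1 then 1 else 0)"
definition pr1 :: "nat \<Rightarrow> nat \<Rightarrow> 'a::semiring_1 mat" where
  "pr1 n1 n2 = mat n1 (n1 + n2) (\<lambda>(i, j). if i = j then 1 else 0)"
definition pr2 :: "nat \<Rightarrow> nat \<Rightarrow> 'a::semiring_1 mat" where
  "pr2 n1 n2 = mat n2 (n1 + n2) (\<lambda>(i, j). if j = i + n1 then 1 else 0)"

lemma bi_dims[simp]:
  "dim_row (bi1 n1 n2) = n1 + n2" "dim_col (bi1 n1 n2) = n1"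
  "dim_row (bi2 n1 n2) = n1 + n2" "dim_col (bi2 n1 n2) = n2"
  "dim_row (pr1 n1 n2) = n1" "dim_col (pr1 n1 n2) = n1 + n2"
  "dim_row (pr2 n1 n2) = n2" "dim_col (pr2 n1 n2) = n1 + n2"
  unfolding bi1_def bi2_def pr1_def pr2_def by simp_all

lemma mult_ind_left: "(if P then (1::'a::semiring_1) else 0) * x = (if P then x else 0)" by simp

lemma pr1_bi1: "pr1 n1 n2 * bi1 n1 n2 = (1\<^sub>m n1 :: 'a::semiring_1 mat)"
  by (rule eq_matI) (auto simp: pr1_def bi1_def scalar_prod_def mult_ind_left)

lemma pr2_bi2: "pr2 n1 n2 * bi2 n1 n2 = (1\<^sub>m n2 :: 'a::semiring_1 mat)"
  by (rule eq_matI) (auto simp: pr2_def bi2_def scalar_prod_def mult_ind_left)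

lemma pr1_bi2: "pr1 n1 n2 * bi2 n1 n2 = (0\<^sub>m n1 n2 :: 'a::semiring_1 mat)"
  by (rule eq_matI) (auto simp: pr1_def bi2_def scalar_prod_def mult_ind_left)

lemma pr2_bi1: "pr2 n1 n2 * bi1 n1 n2 = (0\<^sub>m n2 n1 :: 'a::semiring_1 mat)"
  by (rule eq_matI) (auto simp: pr2_def bi1_def scalar_prod_def mult_ind_left)

lemma bi_pr: "bi1 n1 n2 * pr1 n1 n2 + bi2 n1 n2 * pr2 n1 n2 = (1\<^sub>m (n1 + n2) :: 'a::semiring_1 mat)"
proof (rule eq_matI)
  fix i j assume i: "i < dim_row (1\<^sub>m (n1 + n2) :: 'a mat)" and j: "j < dim_col (1\<^sub>m (n1 + n2) :: 'a mat)"
  hence i': "i < n1 + n2" and j': "j < n1 + n2" by simp_all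
  have e1: "(bi1 n1 n2 * pr1 n1 n2 :: 'a mat) $$ (i, j) = (\<Sum>k\<in>{0..<n1}. if k = i then (if k = j then 1 else 0) else 0)"
    using i' j' by (simp add: bi1_def pr1_def scalar_prod_def mult_ind_left)
  have e2: "(bi2 n1 n2 * pr2 n1 n2 :: 'a mat) $$ (i, j) = (\<Sum>k\<in>{0..<n2}. if i = k + n1 then (if j = k + n1 then 1 else 0) else 0)"
    using i' j' by (simp add: bi2_def pr2_def scalar_prod_def mult_ind_left)
  show "(bi1 n1 n2 * pr1 n1 n2 + bi2 n1 n2 * pr2 n1 n2) $$ (i, j) = (1\<^sub>m (n1 + n2) :: 'a mat) $$ (i, j)"
  proof (cases "i < n1")
    case True
    have "(\<Sum>k\<in>{0..<n2}. if i = k + n1 then (if j = k + n1 then 1 else 0) else (0::'a)) = 0"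
      using True by (intro sum.neutral) auto
    then show ?thesis using i' j' e1 e2 True by simp
  next
    case False
    have "(\<Sum>k\<in>{0..<n1}. if k = i then (if k = j then 1 else 0) else (0::'a)) = 0"
      using False by (intro sum.neutral) auto
    moreover have "(\<Sum>k\<in>{0..<n2}. if i = k + n1 then (if j = k + n1 then 1 else 0) else (0::'a))
       = (\<Sum>k\<in>{0..<n2}. if k = i - n1 then (if j = k + n1 then 1 else 0) else (0::'a))"
      using False by (intro sum.cong) auto
    moreover have "\<dots> = (if j = i then 1 else 0)" using False i' by auto
    ultimately show ?thesis using i' j' e1 e2 False by simp
  qed
qed simp_all


lemma bi_ext: fixes Z :: "'a::semiring_1 mat"
  shows "dim_row Z = n1 \<Longrightarrow> pr1 n1 n2 * (bi1 n1 n2 * Z) = Z"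
    "dim_row Z = n2 \<Longrightarrow> pr2 n1 n2 * (bi2 n1 n2 * Z) = Z"
    "dim_row Z = n2 \<Longrightarrow> pr1 n1 n2 * (bi2 n1 n2 * Z) = 0\<^sub>m n1 (dim_col Z)"
    "dim_row Z = n1 \<Longrightarrow> pr2 n1 n2 * (bi1 n1 n2 * Z) = 0\<^sub>m n2 (dim_col Z)"
  using mext[OF pr1_bi1, of n1 n2 Z] mext[OF pr2_bi2, of n1 n2 Z] mext[OF pr1_bi2, of n1 n2 Z] mext[OF pr2_bi1, of n1 n2 Z]
  by simp_all

lemmas bi_eqs = pr1_bi1 pr2_bi2 pr1_bi2 pr2_bi1 bi_ext

lemma bi_vec:
  fixes x y z :: "'a::field vec"
  shows "x \<in> carrier_vec n1 \<Longrightarrow> bi1 n1 n2 *\<^sub>v x = 0\<^sub>v (n1 + n2) \<Longrightarrow> x = 0\<^sub>v n1"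
    and "z \<in> carrier_vec n2 \<Longrightarrow> \<exists>y\<in>carrier_vec (n1 + n2). pr2 n1 n2 *\<^sub>v y = z"
    and "y \<in> carrier_vec (n1 + n2) \<Longrightarrow> pr2 n1 n2 *\<^sub>v y = 0\<^sub>v n2 \<longleftrightarrow> (\<exists>x\<in>carrier_vec n1. bi1 n1 n2 *\<^sub>v x = y)"
proof -
  show "x \<in> carrier_vec n1 \<Longrightarrow> bi1 n1 n2 *\<^sub>v x = 0\<^sub>v (n1 + n2) \<Longrightarrow> x = 0\<^sub>v n1"
  proof -
    assume x: "x \<in> carrier_vec n1" and h: "bi1 n1 n2 *\<^sub>v x = 0\<^sub>v (n1 + n2)"
    have "x = (pr1 n1 n2 * bi1 n1 n2) *\<^sub>v x" using x by (simp add: pr1_bi1)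
    also have "\<dots> = pr1 n1 n2 *\<^sub>v (bi1 n1 n2 *\<^sub>v x)" by (rule assoc_mult_mat_vec[OF _ _ x]) (auto intro!: carrier_matI)
    also have "\<dots> = 0\<^sub>v n1" unfolding h using mat_mult_zero_vec[of "pr1 n1 n2 :: 'a mat"] by simp
    finally show ?thesis .
  qed
  show "z \<in> carrier_vec n2 \<Longrightarrow> \<exists>y\<in>carrier_vec (n1 + n2). pr2 n1 n2 *\<^sub>v y = z"
  proof -
    assume z: "z \<in> carrier_vec n2"
    have "pr2 n1 n2 *\<^sub>v (bi2 n1 n2 *\<^sub>v z) = (pr2 n1 n2 * bi2 n1 n2) *\<^sub>v z"
      by (rule assoc_mult_mat_vec[OF _ _ z, symmetric]) (auto intro!: carrier_matI)
    also have "\<dots> = z" using z by (simp add: pr2_bi2)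
    finally show ?thesis by (intro bexI[of _ "bi2 n1 n2 *\<^sub>v z"]) (auto intro!: carrier_vecI)
  qed
  assume y: "y \<in> carrier_vec (n1 + n2)"
  show "pr2 n1 n2 *\<^sub>v y = 0\<^sub>v n2 \<longleftrightarrow> (\<exists>x\<in>carrier_vec n1. bi1 n1 n2 *\<^sub>v x = y)"
  proof
    assume h: "pr2 n1 n2 *\<^sub>v y = 0\<^sub>v n2"
    have "y = (bi1 n1 n2 * pr1 n1 n2 + bi2 n1 n2 * pr2 n1 n2) *\<^sub>v y" using y by (simp add: bi_pr)
    also have "\<dots> = (bi1 n1 n2 * pr1 n1 n2) *\<^sub>v y + (bi2 n1 n2 * pr2 n1 n2) *\<^sub>v y"
      by (rule add_mult_distrib_mat_vec[OF _ _ y]) (auto intro!: carrier_matI)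
    also have "(bi2 n1 n2 * pr2 n1 n2) *\<^sub>v y = bi2 n1 n2 *\<^sub>v (pr2 n1 n2 *\<^sub>v y)"
      by (rule assoc_mult_mat_vec[OF _ _ y]) (auto intro!: carrier_matI)
    also have "\<dots> = 0\<^sub>v (n1 + n2)" unfolding h using mat_mult_zero_vec[of "bi2 n1 n2 :: 'a mat"] by simp
    also have "(bi1 n1 n2 * pr1 n1 n2) *\<^sub>v y = bi1 n1 n2 *\<^sub>v (pr1 n1 n2 *\<^sub>v y)"
      by (rule assoc_mult_mat_vec[OF _ _ y]) (auto intro!: carrier_matI)
    finally have "y = bi1 n1 n2 *\<^sub>v (pr1 n1 n2 *\<^sub>v y)"
      by (metis bi_dims(1) carrier_vecI dim_mult_mat_vec right_zero_vec)
    thus "\<exists>x\<in>carrier_vec n1. bi1 n1 n2 *\<^sub>v x = y" by (intro bexI[of _ "pr1 n1 n2 *\<^sub>v y"]) (auto intro!: carrier_vecI)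
  next
    assume "\<exists>x\<in>carrier_vec n1. bi1 n1 n2 *\<^sub>v x = y"
    then obtain x where x: "x \<in> carrier_vec n1" and xy: "bi1 n1 n2 *\<^sub>v x = y" by blast
    have "pr2 n1 n2 *\<^sub>v y = (pr2 n1 n2 * bi1 n1 n2) *\<^sub>v x" unfolding xy[symmetric]
      by (rule assoc_mult_mat_vec[OF _ _ x, symmetric]) (auto intro!: carrier_matI)
    also have "\<dots> = 0\<^sub>v n2" using x by (simp add: pr2_bi1 zero_mat_mult_vec)
    finally show "pr2 n1 n2 *\<^sub>v y = 0\<^sub>v n2" .
  qed
qed


section \<open>Standard extensions\<close>

definition std_rep :: "quiver \<Rightarrow> 'k::field rep \<Rightarrow> 'k rep \<Rightarrow> (nat \<Rightarrow> 'k mat) \<Rightarrow> 'k rep" where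
  "std_rep Q X Y h = \<lparr>rdim = (\<lambda>v. rdim Y v + rdim X v),
     rmat = (\<lambda>a. bi1 (rdim Y (tgt Q a)) (rdim X (tgt Q a)) * rmat Y a * pr1 (rdim Y (src Q a)) (rdim X (src Q a))
       + bi1 (rdim Y (tgt Q a)) (rdim X (tgt Q a)) * h a * pr2 (rdim Y (src Q a)) (rdim X (src Q a))
       + bi2 (rdim Y (tgt Q a)) (rdim X (tgt Q a)) * rmat X a * pr2 (rdim Y (src Q a)) (rdim X (src Q a)))\<rparr>"

definition std_in :: "quiver \<Rightarrow> 'k::field rep \<Rightarrow> 'k rep \<Rightarrow> 'k rhom" where
  "std_in Q X Y = (\<lambda>v. if v < nv Q then bi1 (rdim Y v) (rdim X v) else 0\<^sub>m 0 0)"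
definition std_pr :: "quiver \<Rightarrow> 'k::field rep \<Rightarrow> 'k rep \<Rightarrow> 'k rhom" where
  "std_pr Q X Y = (\<lambda>v. if v < nv Q then pr2 (rdim Y v) (rdim X v) else 0\<^sub>m 0 0)"
definition std :: "quiver \<Rightarrow> 'k::field rep \<Rightarrow> 'k rep \<Rightarrow> (nat \<Rightarrow> 'k mat) \<Rightarrow> 'k ext" where
  "std Q X Y h = (std_rep Q X Y h, std_in Q X Y, std_pr Q X Y)"

context
  fixes Q :: quiver and X Y :: "'k::field rep" and h :: "nat \<Rightarrow> 'k mat"
  assumes wf: "wfq Q" and vX: "valid_rep Q X" and vY: "valid_rep Q Y" and hc: "cocyc Q X Y h"
begin

lemmas sd = wfq_D[OF wf] valid_rep_dims[OF vX] valid_rep_dims[OF vY] cocyc_dims[OF hc]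

lemma std_rdim[simp]: "rdim (std_rep Q X Y h) v = rdim Y v + rdim X v"
  unfolding std_rep_def by simp

lemma std_rmat: "rmat (std_rep Q X Y h) a = bi1 (rdim Y (tgt Q a)) (rdim X (tgt Q a)) * rmat Y a * pr1 (rdim Y (src Q a)) (rdim X (src Q a))
       + bi1 (rdim Y (tgt Q a)) (rdim X (tgt Q a)) * h a * pr2 (rdim Y (src Q a)) (rdim X (src Q a))
       + bi2 (rdim Y (tgt Q a)) (rdim X (tgt Q a)) * rmat X a * pr2 (rdim Y (src Q a)) (rdim X (src Q a))"
  unfolding std_rep_def by simp

lemma std_valid: "valid_rep Q (std_rep Q X Y h)"
  unfolding valid_rep_def std_rmat using sd by (auto intro!: carrier_matI)

lemma std_in_hom: "std_in Q X Y \<in> hom Q Y (std_rep Q X Y h)"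
proof (rule homI)
  fix a assume a: "a < length (arr Q)"
  note [simp] = sd a
  show "rmat (std_rep Q X Y h) a * std_in Q X Y (src Q a) = std_in Q X Y (tgt Q a) * rmat Y a"
    unfolding std_rmat std_in_def by (simp add: mring bi_eqs)
qed (auto simp: std_in_def intro!: carrier_matI)

lemma std_pr_hom: "std_pr Q X Y \<in> hom Q (std_rep Q X Y h) X"
proof (rule homI)
  fix a assume a: "a < length (arr Q)"
  note [simp] = sd a
  show "rmat X a * std_pr Q X Y (src Q a) = std_pr Q X Y (tgt Q a) * rmat (std_rep Q X Y h) a"
    unfolding std_rmat std_pr_def by (simp add: mring bi_eqs)
qed (auto simp: std_pr_def intro!: carrier_matI)

lemma std_ses: "ses Q Y (std_rep Q X Y h) X (std_in Q X Y) (std_pr Q X Y)"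
  unfolding ses_def using std_valid vX vY std_in_hom std_pr_hom
  by (simp add: std_in_def std_pr_def bi_vec(3)) (blast intro: bi_vec(1) bi_vec(2))

lemma std_ext_of: "ext_of Q X Y (std Q X Y h)"
  unfolding ext_of_def std_def using std_ses by simp

lemma std_splits: "splits Q Y (std_rep Q X Y h) X (std_in Q X Y) (std_pr Q X Y)
   (\<lambda>v. bi2 (rdim Y v) (rdim X v)) (\<lambda>v. pr1 (rdim Y v) (rdim X v))"
  unfolding splits_def std_in_def std_pr_def by (auto simp: bi_eqs bi_pr intro!: carrier_matI)

lemma std_sext: "sext Q Y (std_rep Q X Y h) X (std_in Q X Y) (std_pr Q X Y)
   (\<lambda>v. bi2 (rdim Y v) (rdim X v)) (\<lambda>v. pr1 (rdim Y v) (rdim X v))"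
  using wf std_ses std_splits by (simp add: sext_def)

lemma std_kap: "i < length (arr Q) \<Longrightarrow>
   kap Q (std_rep Q X Y h) (\<lambda>v. bi2 (rdim Y v) (rdim X v)) (\<lambda>v. pr1 (rdim Y v) (rdim X v)) i = h i"
  unfolding kap_def std_rmat by (simp add: sd mring bi_eqs)

end


section \<open>Classes as cocycles\<close>

lemma HOM_iff:
  assumes wf: "wfq Q" and e: "ext_of Q X Y e" and e': "ext_of Q X' Y' e'"
    and a: "a \<in> hom Q Y Y'" and b: "b \<in> hom Q X X'"
  shows "(\<exists>\<phi>. ext_hom Q Y X e Y' X' e' a \<phi> b) \<longleftrightarrow>
    (\<exists>w. cochain Q X Y' w \<and> (\<forall>i<length (arr Q). a (tgt Q i) * kapE Q X Y e i + w (tgt Q i) * rmat X i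
               = rmat Y' i * w (src Q i) + kapE Q X' Y' e' i * b (src Q i)))"
proof -
  obtain E \<alpha> \<beta> where E: "e = (E, \<alpha>, \<beta>)" by (cases e) auto
  obtain E' \<alpha>' \<beta>' where E': "e' = (E', \<alpha>', \<beta>')" by (cases e') auto
  let ?s = "fst (splE Q Y E X \<alpha> \<beta>)" and ?r = "snd (splE Q Y E X \<alpha> \<beta>)"
  let ?s' = "fst (splE Q Y' E' X' \<alpha>' \<beta>')" and ?r' = "snd (splE Q Y' E' X' \<alpha>' \<beta>')"
  have se: "sext Q Y E X \<alpha> \<beta> ?s ?r" using ext_of_sext wf e E by blast
  have se': "sext Q Y' E' X' \<alpha>' \<beta>' ?s' ?r'" using ext_of_sext wf e' E' by blast
  have k: "kapE Q X Y e = kap Q E ?s ?r" "kapE Q X' Y' e' = kap Q E' ?s' ?r'" unfolding kapE_def E E' by simp_all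
  show ?thesis unfolding k unfolding E E'
    using HOM_if[OF se se' a b] HOM_only_if[OF se se'] by blast
qed

lemma Ccls_eq:
  assumes wf: "wfq Q" and vX: "valid_rep Q X" and vY: "valid_rep Q Y"
    and h: "cocyc Q X Y h" and h': "cocyc Q X Y h'" and c: "cob Q X Y h h'"
  shows "Ccls Q X Y h = Ccls Q X Y h'"
proof (rule Set.set_eqI)
  fix e
  have "ext_of Q X Y e \<Longrightarrow> cob Q X Y h (kapE Q X Y e) \<longleftrightarrow> cob Q X Y h' (kapE Q X Y e)"
  proof -
    assume eo: "ext_of Q X Y e"
    note k = kapE_cocyc[OF wf eo]
    show ?thesis
    proof
      assume "cob Q X Y h (kapE Q X Y e)"
      from cob_trans[OF wf vX vY h' h k cob_sym[OF wf vX vY h h' c] this] show "cob Q X Y h' (kapE Q X Y e)" .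
    next
      assume "cob Q X Y h' (kapE Q X Y e)"
      from cob_trans[OF wf vX vY h h' k c this] show "cob Q X Y h (kapE Q X Y e)" .
    qed
  qed
  then show "e \<in> Ccls Q X Y h \<longleftrightarrow> e \<in> Ccls Q X Y h'" unfolding Ccls_def by blast
qed

lemma kapE_std:
  assumes wf: "wfq Q" and vX: "valid_rep Q X" and vY: "valid_rep Q Y" and h: "cocyc Q X Y h"
  shows "cob Q X Y h (kapE Q X Y (std Q X Y h))"
proof -
  let ?E = "std_rep Q X Y h" and ?a = "std_in Q X Y" and ?b = "std_pr Q X Y"
  let ?s = "\<lambda>v. bi2 (rdim Y v) (rdim X v) :: 'a mat" and ?r = "\<lambda>v. pr1 (rdim Y v) (rdim X v) :: 'a mat"
  let ?s' = "fst (splE Q Y ?E X ?a ?b)" and ?r' = "snd (splE Q Y ?E X ?a ?b)"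
  have eo: "ext_of Q X Y (?E, ?a, ?b)" using std_ext_of[OF wf vX vY h] unfolding std_def .
  have se: "sext Q Y ?E X ?a ?b ?s ?r" by (rule std_sext[OF wf vX vY h])
  have se': "sext Q Y ?E X ?a ?b ?s' ?r'" using ext_of_sext[OF wf eo] .
  interpret a: sext Q Y ?E X ?a ?b ?s ?r by (rule se)
  have iY: "idh Q Y \<in> hom Q Y Y" and iX: "idh Q X \<in> hom Q X X" and iE: "idh Q ?E \<in> hom Q ?E ?E"
    using idh_hom wf a.vY a.vX a.vE by blast+
  have "ext_hom Q Y X (?E, ?a, ?b) Y X (?E, ?a, ?b) (idh Q Y) (idh Q ?E) (idh Q X)"
    unfolding ext_hom_def using iY iX iE
    by (auto simp: comp_eq_iff idh_apply a.dims)
  from HOM_only_if[OF se se' this] obtain w where w: "cochain Q X Y w" and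
    eq: "\<And>i. i<length (arr Q) \<Longrightarrow> idh Q Y (tgt Q i) * kap Q ?E ?s ?r i + w (tgt Q i) * rmat X i =
         rmat Y i * w (src Q i) + kap Q ?E ?s' ?r' i * idh Q X (src Q i)" by blast
  interpret b: sext Q Y ?E X ?a ?b ?s' ?r' by (rule se')
  show ?thesis unfolding cob_def kapE_def std_def prod.case
  proof (intro exI[of _ w] conjI allI impI w)
    fix i assume i: "i < length (arr Q)"
    show "h i + w (tgt Q i) * rmat X i = rmat Y i * w (src Q i) + kap Q ?E ?s' ?r' i"
      using eq[OF i] std_kap[OF wf vX vY h i] i by (simp add: idh_apply a.dims b.kap_dims cocyc_dims[OF h])
  qed
qed

lemma ext_cls_std:
  assumes wf: "wfq Q" and vX: "valid_rep Q X" and vY: "valid_rep Q Y" and h: "cocyc Q X Y h"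
  shows "ext_cls Q X Y (std Q X Y h) = Ccls Q X Y h"
proof -
  have c: "cob Q X Y (kapE Q X Y (std Q X Y h)) h"
    using cob_sym[OF wf vX vY h kapE_cocyc[OF wf std_ext_of[OF wf vX vY h]] kapE_std[OF wf vX vY h]] .
  show ?thesis unfolding cls_char[OF wf std_ext_of[OF wf vX vY h]]
    using Ccls_eq[OF wf vX vY kapE_cocyc[OF wf std_ext_of[OF wf vX vY h]] h c] .
qed

lemma std_in_Ccls:
  assumes wf: "wfq Q" and vX: "valid_rep Q X" and vY: "valid_rep Q Y" and h: "cocyc Q X Y h"
  shows "std Q X Y h \<in> Ccls Q X Y h"
  unfolding Ccls_def using std_ext_of[OF wf vX vY h] kapE_std[OF wf vX vY h] by blast

lemma Ext1_char:
  assumes wf: "wfq Q" and vX: "valid_rep Q X" and vY: "valid_rep Q Y"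
  shows "Ext1 Q X Y = {Ccls Q X Y h | h. cocyc Q X Y h}"
proof
  show "Ext1 Q X Y \<subseteq> {Ccls Q X Y h | h. cocyc Q X Y h}"
    unfolding Ext1_def using cls_char[OF wf] kapE_cocyc[OF wf] by blast
  show "{Ccls Q X Y h | h. cocyc Q X Y h} \<subseteq> Ext1 Q X Y"
    unfolding Ext1_def using ext_cls_std[OF wf vX vY, symmetric] std_ext_of[OF wf vX vY] by blast
qed

lemma Ccls_eq_iff:
  assumes wf: "wfq Q" and vX: "valid_rep Q X" and vY: "valid_rep Q Y"
    and h: "cocyc Q X Y h" and h': "cocyc Q X Y h'"
  shows "Ccls Q X Y h = Ccls Q X Y h' \<longleftrightarrow> cob Q X Y h h'"
proof
  assume eq: "Ccls Q X Y h = Ccls Q X Y h'"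
  have "std Q X Y h \<in> Ccls Q X Y h'" using std_in_Ccls[OF wf vX vY h] eq by simp
  hence c1: "cob Q X Y h' (kapE Q X Y (std Q X Y h))" unfolding Ccls_def by simp
  note k = kapE_cocyc[OF wf std_ext_of[OF wf vX vY h]]
  from cob_trans[OF wf vX vY h k h' kapE_std[OF wf vX vY h] cob_sym[OF wf vX vY h' k c1]]
  show "cob Q X Y h h'" .
qed (rule Ccls_eq[OF wf vX vY h h'])

lemma split_Ccls:
  fixes X Y :: "'k::field rep"
  assumes wf: "wfq Q" and vX: "valid_rep Q X" and vY: "valid_rep Q Y"
  shows "split_cls Q X Y = Ccls Q X Y (zc Q X Y)"
proof -
  have "ext_of Q X Y e \<Longrightarrow> cob Q X Y (kapE Q X Y e) (zc Q X Y) \<longleftrightarrow> cob Q X Y (zc Q X Y) (kapE Q X Y e)" for e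
    using cob_sym[OF wf vX vY zc_cocyc kapE_cocyc[OF wf]] cob_sym[OF wf vX vY kapE_cocyc[OF wf] zc_cocyc] by blast
  then show ?thesis unfolding split_cls_eq[OF wf] Ccls_def by blast
qed


lemma cocyc_left: assumes "wfq Q" "cocyc Q X Y h" "g \<in> hom Q Y Y'"
  shows "cocyc Q X Y' (\<lambda>i. g (tgt Q i) * h i)"
  using assms unfolding cocyc_def by (auto intro!: carrier_matI simp: wfq_D hom_dims cocyc_dims[OF assms(2)])

lemma cocyc_right: assumes "wfq Q" "cocyc Q X Y h" "f \<in> hom Q X' X"
  shows "cocyc Q X' Y (\<lambda>i. h i * f (src Q i))"
  using assms unfolding cocyc_def by (auto intro!: carrier_matI simp: wfq_D hom_dims cocyc_dims[OF assms(2)])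

lemma cob_map_left:
  assumes wf: "wfq Q" and vX: "valid_rep Q X" and vY: "valid_rep Q Y" and vY': "valid_rep Q Y'"
    and h: "cocyc Q X Y h" and h': "cocyc Q X Y h'" and g: "g \<in> hom Q Y Y'" and c: "cob Q X Y h h'"
  shows "cob Q X Y' (\<lambda>i. g (tgt Q i) * h i) (\<lambda>i. g (tgt Q i) * h' i)"
proof -
  from c obtain w where w: "cochain Q X Y w" and
    eq: "\<And>i. i<length (arr Q) \<Longrightarrow> h i + w (tgt Q i) * rmat X i = rmat Y i * w (src Q i) + h' i"
    unfolding cob_def by blast
  show ?thesis unfolding cob_def
  proof (intro exI[of _ "\<lambda>v. g v * w v"] conjI allI impI)
    show "cochain Q X Y' (\<lambda>v. g v * w v)" unfolding cochain_def
      using w g by (auto intro!: carrier_matI simp: cochain_dims hom_dims)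
    fix i assume i: "i < length (arr Q)"
    note [simp] = i wfq_D[OF wf] valid_rep_dims[OF vX] valid_rep_dims[OF vY] valid_rep_dims[OF vY']
      cocyc_dims[OF h] cocyc_dims[OF h'] cochain_dims[OF w] hom_dims[OF g]
    have "g (tgt Q i) * (h i + w (tgt Q i) * rmat X i) = g (tgt Q i) * (rmat Y i * w (src Q i) + h' i)"
      by (simp add: eq[OF i])
    thus "g (tgt Q i) * h i + g (tgt Q i) * w (tgt Q i) * rmat X i = rmat Y' i * (g (src Q i) * w (src Q i)) + g (tgt Q i) * h' i"
      by (simp add: mring hom_comm_ext[OF wf vY vY' g])
  qed
qed

lemma cob_map_right:
  assumes wf: "wfq Q" and vX: "valid_rep Q X" and vY: "valid_rep Q Y" and vX': "valid_rep Q X'"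
    and h: "cocyc Q X Y h" and h': "cocyc Q X Y h'" and f: "f \<in> hom Q X' X" and c: "cob Q X Y h h'"
  shows "cob Q X' Y (\<lambda>i. h i * f (src Q i)) (\<lambda>i. h' i * f (src Q i))"
proof -
  from c obtain w where w: "cochain Q X Y w" and
    eq: "\<And>i. i<length (arr Q) \<Longrightarrow> h i + w (tgt Q i) * rmat X i = rmat Y i * w (src Q i) + h' i"
    unfolding cob_def by blast
  show ?thesis unfolding cob_def
  proof (intro exI[of _ "\<lambda>v. w v * f v"] conjI allI impI)
    show "cochain Q X' Y (\<lambda>v. w v * f v)" unfolding cochain_def
      using w f by (auto intro!: carrier_matI simp: cochain_dims hom_dims)
    fix i assume i: "i < length (arr Q)"
    note [simp] = i wfq_D[OF wf] valid_rep_dims[OF vX] valid_rep_dims[OF vY] valid_rep_dims[OF vX']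
      cocyc_dims[OF h] cocyc_dims[OF h'] cochain_dims[OF w] hom_dims[OF f]
    have "(h i + w (tgt Q i) * rmat X i) * f (src Q i) = (rmat Y i * w (src Q i) + h' i) * f (src Q i)"
      by (simp add: eq[OF i])
    thus "h i * f (src Q i) + w (tgt Q i) * f (tgt Q i) * rmat X' i = rmat Y i * (w (src Q i) * f (src Q i)) + h' i * f (src Q i)"
      by (simp add: mring hom_comm[OF f i])
  qed
qed

lemma push_Ccls:
  assumes wf: "wfq Q" and vX: "valid_rep Q X" and vY: "valid_rep Q Y" and vY': "valid_rep Q Y'"
    and h: "cocyc Q X Y h" and g: "g \<in> hom Q Y Y'"
  shows "push Q X Y Y' g (Ccls Q X Y h) = Ccls Q X Y' (\<lambda>i. g (tgt Q i) * h i)"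
proof (rule Set.set_eqI)
  fix e'
  have iX: "idh Q X \<in> hom Q X X" using idh_hom[OF wf vX] .
  have gh: "cocyc Q X Y' (\<lambda>i. g (tgt Q i) * h i)" by (rule cocyc_left[OF wf h g])
  have hiff: "(\<exists>\<phi>. ext_hom Q Y X e Y' X e' g \<phi> (idh Q X)) \<longleftrightarrow>
      cob Q X Y' (\<lambda>i. g (tgt Q i) * kapE Q X Y e i) (kapE Q X Y' e')"
    if e: "ext_of Q X Y e" and e': "ext_of Q X Y' e'" for e
  proof -
    have "\<And>i w. i < length (arr Q) \<Longrightarrow> kapE Q X Y' e' i * idh Q X (src Q i) = kapE Q X Y' e' i"
      using kapE_cocyc[OF wf e'] by (simp add: idh_apply wfq_D[OF wf] cocyc_dims)
    thus ?thesis unfolding HOM_iff[OF wf e e' g iX] cob_def by simp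
  qed
  show "e' \<in> push Q X Y Y' g (Ccls Q X Y h) \<longleftrightarrow> e' \<in> Ccls Q X Y' (\<lambda>i. g (tgt Q i) * h i)"
  proof
    assume "e' \<in> push Q X Y Y' g (Ccls Q X Y h)"
    then obtain e \<phi> where e': "ext_of Q X Y' e'" and e: "ext_of Q X Y e" and c: "cob Q X Y h (kapE Q X Y e)"
      and ph: "ext_hom Q Y X e Y' X e' g \<phi> (idh Q X)"
      unfolding push_def Ccls_def by blast
    have k: "cocyc Q X Y (kapE Q X Y e)" using kapE_cocyc[OF wf e] .
    have c2: "cob Q X Y' (\<lambda>i. g (tgt Q i) * kapE Q X Y e i) (kapE Q X Y' e')" using hiff[OF e e'] ph by blast
    have c1: "cob Q X Y' (\<lambda>i. g (tgt Q i) * h i) (\<lambda>i. g (tgt Q i) * kapE Q X Y e i)"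
      by (rule cob_map_left[OF wf vX vY vY' h k g c])
    from cob_trans[OF wf vX vY' gh cocyc_left[OF wf k g] kapE_cocyc[OF wf e'] c1 c2] e'
    show "e' \<in> Ccls Q X Y' (\<lambda>i. g (tgt Q i) * h i)" unfolding Ccls_def by blast
  next
    assume "e' \<in> Ccls Q X Y' (\<lambda>i. g (tgt Q i) * h i)"
    then have e': "ext_of Q X Y' e'" and c: "cob Q X Y' (\<lambda>i. g (tgt Q i) * h i) (kapE Q X Y' e')"
      unfolding Ccls_def by auto
    let ?e = "std Q X Y h"
    have e: "ext_of Q X Y ?e" by (rule std_ext_of[OF wf vX vY h])
    have k: "cocyc Q X Y (kapE Q X Y ?e)" using kapE_cocyc[OF wf e] .
    have c0: "cob Q X Y (kapE Q X Y ?e) h" by (rule cob_sym[OF wf vX vY h k kapE_std[OF wf vX vY h]])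
    have c1: "cob Q X Y' (\<lambda>i. g (tgt Q i) * kapE Q X Y ?e i) (\<lambda>i. g (tgt Q i) * h i)"
      by (rule cob_map_left[OF wf vX vY vY' k h g c0])
    from cob_trans[OF wf vX vY' cocyc_left[OF wf k g] gh kapE_cocyc[OF wf e'] c1 c]
    have "\<exists>\<phi>. ext_hom Q Y X ?e Y' X e' g \<phi> (idh Q X)" using hiff[OF e e'] by blast
    moreover have "?e \<in> Ccls Q X Y h" by (rule std_in_Ccls[OF wf vX vY h])
    ultimately show "e' \<in> push Q X Y Y' g (Ccls Q X Y h)" unfolding push_def using e' by blast
  qed
qed

lemma pull_Ccls:
  assumes wf: "wfq Q" and vX: "valid_rep Q X" and vY: "valid_rep Q Y" and vX': "valid_rep Q X'"
    and h: "cocyc Q X Y h" and f: "f \<in> hom Q X' X"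
  shows "pull Q X' X Y f (Ccls Q X Y h) = Ccls Q X' Y (\<lambda>i. h i * f (src Q i))"
proof (rule Set.set_eqI)
  fix e'
  have iY: "idh Q Y \<in> hom Q Y Y" using idh_hom[OF wf vY] .
  have hf: "cocyc Q X' Y (\<lambda>i. h i * f (src Q i))" by (rule cocyc_right[OF wf h f])
  have hiff: "(\<exists>\<phi>. ext_hom Q Y X' e' Y X e (idh Q Y) \<phi> f) \<longleftrightarrow>
      cob Q X' Y (kapE Q X' Y e') (\<lambda>i. kapE Q X Y e i * f (src Q i))"
    if e: "ext_of Q X Y e" and e': "ext_of Q X' Y e'" for e
  proof -
    have "\<And>i w. i < length (arr Q) \<Longrightarrow> idh Q Y (tgt Q i) * kapE Q X' Y e' i = kapE Q X' Y e' i"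
      using kapE_cocyc[OF wf e'] by (simp add: idh_apply wfq_D[OF wf] cocyc_dims)
    thus ?thesis unfolding HOM_iff[OF wf e' e iY f] cob_def by simp
  qed
  show "e' \<in> pull Q X' X Y f (Ccls Q X Y h) \<longleftrightarrow> e' \<in> Ccls Q X' Y (\<lambda>i. h i * f (src Q i))"
  proof
    assume "e' \<in> pull Q X' X Y f (Ccls Q X Y h)"
    then obtain e \<phi> where e': "ext_of Q X' Y e'" and e: "ext_of Q X Y e" and c: "cob Q X Y h (kapE Q X Y e)"
      and ph: "ext_hom Q Y X' e' Y X e (idh Q Y) \<phi> f"
      unfolding pull_def Ccls_def by blast
    have k: "cocyc Q X Y (kapE Q X Y e)" using kapE_cocyc[OF wf e] .
    have c2: "cob Q X' Y (kapE Q X' Y e') (\<lambda>i. kapE Q X Y e i * f (src Q i))" using hiff[OF e e'] ph by blast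
    have c1: "cob Q X' Y (\<lambda>i. h i * f (src Q i)) (\<lambda>i. kapE Q X Y e i * f (src Q i))"
      by (rule cob_map_right[OF wf vX vY vX' h k f c])
    from cob_trans[OF wf vX' vY hf cocyc_right[OF wf k f] kapE_cocyc[OF wf e'] c1
        cob_sym[OF wf vX' vY kapE_cocyc[OF wf e'] cocyc_right[OF wf k f] c2]] e'
    show "e' \<in> Ccls Q X' Y (\<lambda>i. h i * f (src Q i))" unfolding Ccls_def by blast
  next
    assume "e' \<in> Ccls Q X' Y (\<lambda>i. h i * f (src Q i))"
    then have e': "ext_of Q X' Y e'" and c: "cob Q X' Y (\<lambda>i. h i * f (src Q i)) (kapE Q X' Y e')"
      unfolding Ccls_def by auto
    let ?e = "std Q X Y h"
    have e: "ext_of Q X Y ?e" by (rule std_ext_of[OF wf vX vY h])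
    have k: "cocyc Q X Y (kapE Q X Y ?e)" using kapE_cocyc[OF wf e] .
    have c1: "cob Q X' Y (\<lambda>i. h i * f (src Q i)) (\<lambda>i. kapE Q X Y ?e i * f (src Q i))"
      by (rule cob_map_right[OF wf vX vY vX' h k f kapE_std[OF wf vX vY h]])
    from cob_trans[OF wf vX' vY kapE_cocyc[OF wf e'] hf cocyc_right[OF wf k f]
        cob_sym[OF wf vX' vY hf kapE_cocyc[OF wf e'] c] c1]
    have "\<exists>\<phi>. ext_hom Q Y X' e' Y X ?e (idh Q Y) \<phi> f" using hiff[OF e e'] by blast
    moreover have "?e \<in> Ccls Q X Y h" by (rule std_in_Ccls[OF wf vX vY h])
    ultimately show "e' \<in> pull Q X' X Y f (Ccls Q X Y h)" unfolding pull_def using e' by blast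
  qed
qed


section \<open>The fixed short exact sequence\<close>

lemma zeroh_apply: "v < nv Q \<Longrightarrow> zeroh Q X Y v = 0\<^sub>m (rdim Y v) (rdim X v)" unfolding zeroh_def by simp

lemma cob_cong: assumes "\<And>i. i < length (arr Q) \<Longrightarrow> h1 i = h1' i" "\<And>i. i < length (arr Q) \<Longrightarrow> h2 i = h2' i"
  shows "cob Q X Y h1 h2 = cob Q X Y h1' h2'"
  unfolding cob_def using assms by auto

lemma Ccls_cong: assumes "\<And>i. i < length (arr Q) \<Longrightarrow> h1 i = h1' i"
  shows "Ccls Q X Y h1 = Ccls Q X Y h1'"
  unfolding Ccls_def using cob_cong[of Q h1 h1' "kapE Q X Y e" "kapE Q X Y e" X Y for e] assms by auto

locale sesG =
  fixes Q :: quiver and M K N G :: "'k::field rep" and \<iota> p :: "'k rhom"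
  assumes wf0: "wfq Q" and ses0: "ses Q M K N \<iota> p" and vG: "valid_rep Q G"
begin

abbreviation "ss \<equiv> fst (splE Q M K N \<iota> p)"
abbreviation "rr \<equiv> snd (splE Q M K N \<iota> p)"
abbreviation "kk \<equiv> kap Q K ss rr"

lemma eo: "ext_of Q N M (K, \<iota>, p)" unfolding ext_of_def using ses0 by simp

sublocale sext Q M K N \<iota> p ss rr using ext_of_sext[OF wf0 eo] .

lemma kapE_eta: "kapE Q N M (K, \<iota>, p) = kk" unfolding kapE_def by simp

lemma vM: "valid_rep Q M" and vK: "valid_rep Q K" and vN: "valid_rep Q N" using vY vE vX .

lemma kk_cocyc: "cocyc Q N M kk" using kapE_cocyc[OF wf eo] unfolding kapE_eta .

lemma eta_Ccls: "ext_cls Q N M (K, \<iota>, p) = Ccls Q N M kk"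
  using cls_char[OF wf eo] unfolding kapE_eta .

lemmas gd = dims valid_rep_dims[OF vG] kap_dims

lemma F1: assumes f: "f \<in> hom Q G M" and z: "comp Q \<iota> f = zeroh Q G K" shows "f = zeroh Q G M"
proof
  fix v show "f v = zeroh Q G M v"
  proof (cases "v < nv Q")
    case True
    note [simp] = True gd hom_dims[OF f]
    have "\<iota> v * f v = 0\<^sub>m (rdim K v) (rdim G v)" using fun_cong[OF z, of v] by (simp add: comp_apply zeroh_apply)
    hence "rr v * (\<iota> v * f v) = 0\<^sub>m (rdim M v) (rdim G v)" by simp
    thus ?thesis by (simp add: splits_eqs_ext[OF sp ses] zeroh_apply)
  qed (simp add: hom_out[OF f] zeroh_def)
qed

lemma F2: assumes f: "f \<in> hom Q G K"
  shows "comp Q p f = zeroh Q G N \<longleftrightarrow> (\<exists>g\<in>hom Q G M. comp Q \<iota> g = f)"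
proof
  assume z: "comp Q p f = zeroh Q G N"
  note [simp] = gd hom_dims[OF f]
  have pf: "p v * f v = 0\<^sub>m (rdim N v) (rdim G v)" if "v < nv Q" for v
    using fun_cong[OF z, of v] that by (simp add: comp_apply zeroh_apply)
  define g where "g = (\<lambda>v. if v < nv Q then rr v * f v else 0\<^sub>m 0 0)"
  have gh: "g \<in> hom Q G M"
  proof (rule homI)
    fix a assume a: "a < length (arr Q)"
    note [simp] = a
    have "rr (tgt Q a) * (rmat K a * f (src Q a)) = rr (tgt Q a) * (f (tgt Q a) * rmat G a)"
      by (simp add: hom_comm[OF f a])
    thus "rmat M a * g (src Q a) = g (tgt Q a) * rmat G a"
      unfolding g_def by (simp add: i1_ext pf mring)
  qed (auto simp: g_def intro!: carrier_matI)
  have "comp Q \<iota> g = f"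
  proof
    fix v show "comp Q \<iota> g v = f v"
    proof (cases "v < nv Q")
      case True
      note [simp] = True
      have "(\<iota> v * rr v + ss v * p v) * f v = f v" by (simp add: splits_eqs[OF sp])
      thus ?thesis unfolding g_def by (simp add: comp_apply mring pf)
    qed (simp add: comp_def hom_out[OF f])
  qed
  with gh show "\<exists>g\<in>hom Q G M. comp Q \<iota> g = f" by blast
next
  assume "\<exists>g\<in>hom Q G M. comp Q \<iota> g = f"
  then obtain g where g: "g \<in> hom Q G M" and gf: "comp Q \<iota> g = f" by blast
  note [simp] = gd hom_dims[OF g]
  show "comp Q p f = zeroh Q G N"
  proof
    fix v show "comp Q p f v = zeroh Q G N v"
      unfolding gf[symmetric] by (cases "v < nv Q") (simp_all add: comp_def zeroh_def splits_eqs_ext[OF sp ses])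
  qed
qed

lemma hcomp_cocyc: "cocyc Q G N kk' \<Longrightarrow> True" by simp

lemma F3: assumes f: "f \<in> hom Q G N"
  shows "cob Q G M (\<lambda>i. kk i * f (src Q i)) (zc Q G M) \<longleftrightarrow> (\<exists>g\<in>hom Q G K. comp Q p g = f)"
proof
  assume "cob Q G M (\<lambda>i. kk i * f (src Q i)) (zc Q G M)"
  then obtain w where w: "cochain Q G M w" and
    eq: "\<And>i. i < length (arr Q) \<Longrightarrow> kk i * f (src Q i) + w (tgt Q i) * rmat G i = rmat M i * w (src Q i) + zc Q G M i"
    unfolding cob_def by blast
  note [simp] = gd hom_dims[OF f] cochain_dims[OF w]
  define g where "g = (\<lambda>v. if v < nv Q then ss v * f v - \<iota> v * w v else 0\<^sub>m 0 0)"
  have gh: "g \<in> hom Q G K"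
  proof (rule homI)
    fix i assume i: "i < length (arr Q)"
    note [simp] = i
    have eq': "rmat M i * w (src Q i) = kk i * f (src Q i) + w (tgt Q i) * rmat G i"
      using eq[OF i] by (simp add: zc_def mring)
    have P: "\<iota> (tgt Q i) * (rmat M i * w (src Q i)) = \<iota> (tgt Q i) * (kk i * f (src Q i)) + \<iota> (tgt Q i) * (w (tgt Q i) * rmat G i)"
      unfolding eq' by (simp add: mring)
    have "rmat K i * g (src Q i) = (\<iota> (tgt Q i) * (kk i * f (src Q i)) + ss (tgt Q i) * (f (tgt Q i) * rmat G i)) - \<iota> (tgt Q i) * (rmat M i * w (src Q i))"
      unfolding g_def by (simp add: mring i2_ext hom_comm_ext[OF wf vY vE ah] hom_comm_ext[OF wf vG vX f] hom_comm[OF f i])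
    also have "\<dots> = ss (tgt Q i) * (f (tgt Q i) * rmat G i) - \<iota> (tgt Q i) * (w (tgt Q i) * rmat G i)"
      by (rule lin_split2[OF _ _ _ _ P]; rule carrier_matI; simp)
    also have "\<dots> = g (tgt Q i) * rmat G i" unfolding g_def by (simp add: mring)
    finally show "rmat K i * g (src Q i) = g (tgt Q i) * rmat G i" .
  qed (auto simp: g_def intro!: carrier_matI)
  have "comp Q p g = f"
  proof
    fix v show "comp Q p g v = f v"
      by (cases "v < nv Q") (simp_all add: comp_def g_def mring splits_eqs[OF sp] splits_eqs_ext[OF sp ses] hom_out[OF f])
  qed
  with gh show "\<exists>g\<in>hom Q G K. comp Q p g = f" by blast
next
  assume "\<exists>g\<in>hom Q G K. comp Q p g = f"
  then obtain g where g: "g \<in> hom Q G K" and gf: "comp Q p g = f" by blast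
  note [simp] = gd hom_dims[OF g]
  have pg: "p v * g v = f v" if "v < nv Q" for v using fun_cong[OF gf, of v] that by (simp add: comp_apply)
  show "cob Q G M (\<lambda>i. kk i * f (src Q i)) (zc Q G M)" unfolding cob_def
  proof (intro exI[of _ "\<lambda>v. - (rr v * g v)"] conjI allI impI)
    show "cochain Q G M (\<lambda>v. - (rr v * g v))" unfolding cochain_def by (auto intro!: carrier_matI)
    fix i assume i: "i < length (arr Q)"
    note [simp] = i
    have "rr (tgt Q i) * (rmat K i * g (src Q i)) = rr (tgt Q i) * (g (tgt Q i) * rmat G i)"
      by (simp add: hom_comm[OF g i])
    hence H: "rmat M i * (rr (src Q i) * g (src Q i)) + kk i * f (src Q i) = (rr (tgt Q i) * g (tgt Q i)) * rmat G i"
      by (simp add: i1_ext mring pg[symmetric])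
    have "kk i * f (src Q i) + - ((rr (tgt Q i) * g (tgt Q i)) * rmat G i) =
        - (rmat M i * (rr (src Q i) * g (src Q i))) + 0\<^sub>m (rdim M (tgt Q i)) (rdim G (src Q i))"
      by (rule lin_split1[OF _ _ _ H]; rule carrier_matI; simp add: hom_dims[OF f]; fail)
    thus "kk i * f (src Q i) + - (rr (tgt Q i) * g (tgt Q i)) * rmat G i =
        rmat M i * - (rr (src Q i) * g (src Q i)) + zc Q G M i"
      unfolding zc_def by simp
  qed
qed

lemma F4: assumes h: "cocyc Q G M h"
  shows "cob Q G K (\<lambda>i. \<iota> (tgt Q i) * h i) (zc Q G K) \<longleftrightarrow> (\<exists>f\<in>hom Q G N. cob Q G M (\<lambda>i. kk i * f (src Q i)) h)"
proof
  assume "cob Q G K (\<lambda>i. \<iota> (tgt Q i) * h i) (zc Q G K)"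
  then obtain w where w: "cochain Q G K w" and
    eq: "\<And>i. i < length (arr Q) \<Longrightarrow> \<iota> (tgt Q i) * h i + w (tgt Q i) * rmat G i = rmat K i * w (src Q i) + zc Q G K i"
    unfolding cob_def by blast
  note [simp] = gd cochain_dims[OF w] cocyc_dims[OF h]
  have eq': "rmat K i * w (src Q i) = \<iota> (tgt Q i) * h i + w (tgt Q i) * rmat G i" if i: "i < length (arr Q)" for i
    using eq[OF i] i by (simp add: zc_def mring)
  define f where "f = (\<lambda>v. if v < nv Q then p v * w v else 0\<^sub>m 0 0)"
  have fh: "f \<in> hom Q G N"
  proof (rule homI)
    fix i assume i: "i < length (arr Q)"
    note [simp] = i
    show "rmat N i * f (src Q i) = f (tgt Q i) * rmat G i"
      unfolding f_def by (simp add: hom_comm_ext[OF wf vE vX bh] eq'[OF i] mring splits_eqs_ext[OF sp ses])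
  qed (auto simp: f_def intro!: carrier_matI)
  have "cob Q G M (\<lambda>i. kk i * f (src Q i)) h" unfolding cob_def
  proof (intro exI[of _ "\<lambda>v. - (rr v * w v)"] conjI allI impI)
    show "cochain Q G M (\<lambda>v. - (rr v * w v))" unfolding cochain_def by (auto intro!: carrier_matI)
    fix i assume i: "i < length (arr Q)"
    note [simp] = i
    have H: "rmat M i * (rr (src Q i) * w (src Q i)) + kk i * (p (src Q i) * w (src Q i)) = h i + (rr (tgt Q i) * w (tgt Q i)) * rmat G i"
      using arg_cong[OF eq'[OF i], of "\<lambda>X. rr (tgt Q i) * X"] by (simp add: i1_ext mring splits_eqs_ext[OF sp ses])
    have "kk i * (p (src Q i) * w (src Q i)) + - ((rr (tgt Q i) * w (tgt Q i)) * rmat G i) = - (rmat M i * (rr (src Q i) * w (src Q i))) + h i"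
      by (rule lin_sw2[OF _ _ _ _ H]; rule carrier_matI; simp)
    thus "kk i * f (src Q i) + - (rr (tgt Q i) * w (tgt Q i)) * rmat G i = rmat M i * - (rr (src Q i) * w (src Q i)) + h i"
      unfolding f_def by simp
  qed
  with fh show "\<exists>f\<in>hom Q G N. cob Q G M (\<lambda>i. kk i * f (src Q i)) h" by blast
next
  assume "\<exists>f\<in>hom Q G N. cob Q G M (\<lambda>i. kk i * f (src Q i)) h"
  then obtain f u where f: "f \<in> hom Q G N" and u: "cochain Q G M u" and
    eq: "\<And>i. i < length (arr Q) \<Longrightarrow> kk i * f (src Q i) + u (tgt Q i) * rmat G i = rmat M i * u (src Q i) + h i"
    unfolding cob_def by blast
  note [simp] = gd cochain_dims[OF u] cocyc_dims[OF h] hom_dims[OF f]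
  show "cob Q G K (\<lambda>i. \<iota> (tgt Q i) * h i) (zc Q G K)" unfolding cob_def
  proof (intro exI[of _ "\<lambda>v. ss v * f v - \<iota> v * u v"] conjI allI impI)
    show "cochain Q G K (\<lambda>v. ss v * f v - \<iota> v * u v)" unfolding cochain_def by (auto intro!: carrier_matI)
    fix i assume i: "i < length (arr Q)"
    note [simp] = i
    have H: "\<iota> (tgt Q i) * (kk i * f (src Q i)) + \<iota> (tgt Q i) * (u (tgt Q i) * rmat G i) =
       \<iota> (tgt Q i) * (rmat M i * u (src Q i)) + \<iota> (tgt Q i) * h i"
      using arg_cong[OF eq[OF i], of "\<lambda>X. \<iota> (tgt Q i) * X"] by (simp add: mring)
    have "\<iota> (tgt Q i) * h i + (ss (tgt Q i) * (f (tgt Q i) * rmat G i) - \<iota> (tgt Q i) * (u (tgt Q i) * rmat G i)) =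
      (\<iota> (tgt Q i) * (kk i * f (src Q i)) + ss (tgt Q i) * (f (tgt Q i) * rmat G i) - \<iota> (tgt Q i) * (rmat M i * u (src Q i)))
       + 0\<^sub>m (rdim K (tgt Q i)) (rdim G (src Q i))"
      by (rule lin_F4[OF _ _ _ _ _ H]; rule carrier_matI; simp)
    thus "\<iota> (tgt Q i) * h i + (ss (tgt Q i) * f (tgt Q i) - \<iota> (tgt Q i) * u (tgt Q i)) * rmat G i =
      rmat K i * (ss (src Q i) * f (src Q i) - \<iota> (src Q i) * u (src Q i)) + zc Q G K i"
      unfolding zc_def by (simp add: mring i2_ext hom_comm_ext[OF wf vY vE ah] hom_comm[OF f i])
  qed
qed

lemma F5: assumes h: "cocyc Q G K h"
  shows "cob Q G N (\<lambda>i. p (tgt Q i) * h i) (zc Q G N) \<longleftrightarrow> (\<exists>d. cocyc Q G M d \<and> cob Q G K (\<lambda>i. \<iota> (tgt Q i) * d i) h)"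
proof
  assume "cob Q G N (\<lambda>i. p (tgt Q i) * h i) (zc Q G N)"
  then obtain w where w: "cochain Q G N w" and
    eq: "\<And>i. i < length (arr Q) \<Longrightarrow> p (tgt Q i) * h i + w (tgt Q i) * rmat G i = rmat N i * w (src Q i) + zc Q G N i"
    unfolding cob_def by blast
  note [simp] = gd cochain_dims[OF w] cocyc_dims[OF h]
  define u where "u = (\<lambda>v. ss v * w v)"
  define H where "H = (\<lambda>i. h i + u (tgt Q i) * rmat G i - rmat K i * u (src Q i))"
  define d where "d = (\<lambda>i. rr (tgt Q i) * H i)"
  have pH: "p (tgt Q i) * H i = 0\<^sub>m (rdim N (tgt Q i)) (rdim G (src Q i))" if i: "i < length (arr Q)" for i
  proof -
    note [simp] = i
    have "p (tgt Q i) * H i = p (tgt Q i) * h i + w (tgt Q i) * rmat G i - rmat N i * w (src Q i)"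
      unfolding H_def u_def by (simp add: mring hom_comm_ext[OF wf vE vX bh, symmetric] splits_eqs_ext[OF sp ses])
    also have "\<dots> = 0\<^sub>m (rdim N (tgt Q i)) (rdim G (src Q i))"
      by (rule lin_F5a[OF _ _ _ eq[OF i, unfolded zc_def]]; rule carrier_matI; simp)
    finally show ?thesis .
  qed
  have iH: "\<iota> (tgt Q i) * d i = H i" if i: "i < length (arr Q)" for i
  proof -
    note [simp] = i
    have Hd[simp]: "dim_row (H i) = rdim K (tgt Q i)" "dim_col (H i) = rdim G (src Q i)"
      unfolding H_def u_def by simp_all
    have "H i = (\<iota> (tgt Q i) * rr (tgt Q i) + ss (tgt Q i) * p (tgt Q i)) * H i"
      by (simp add: splits_eqs[OF sp])
    also have "\<dots> = \<iota> (tgt Q i) * d i"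
      unfolding d_def using pH[OF i] by (simp add: mring)
    finally show ?thesis by simp
  qed
  have dc: "cocyc Q G M d" unfolding cocyc_def d_def H_def u_def by (auto intro!: carrier_matI)
  have c: "cob Q G K h (\<lambda>i. \<iota> (tgt Q i) * d i)" unfolding cob_def
  proof (intro exI[of _ u] conjI allI impI)
    show "cochain Q G K u" unfolding cochain_def u_def by (auto intro!: carrier_matI)
    fix i assume i: "i < length (arr Q)"
    note [simp] = i
    show "h i + u (tgt Q i) * rmat G i = rmat K i * u (src Q i) + \<iota> (tgt Q i) * d i"
      unfolding iH[OF i] unfolding H_def by (rule lin_F5b; rule carrier_matI; simp add: u_def)
  qed
  have "cob Q G K (\<lambda>i. \<iota> (tgt Q i) * d i) h"
    by (rule cob_sym[OF wf vG vK h _ c]) (use dc in \<open>auto simp: cocyc_def intro!: carrier_matI dest: cocyc_dims\<close>)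
  with dc show "\<exists>d. cocyc Q G M d \<and> cob Q G K (\<lambda>i. \<iota> (tgt Q i) * d i) h" by blast
next
  assume "\<exists>d. cocyc Q G M d \<and> cob Q G K (\<lambda>i. \<iota> (tgt Q i) * d i) h"
  then obtain d u where d: "cocyc Q G M d" and u: "cochain Q G K u" and
    eq: "\<And>i. i < length (arr Q) \<Longrightarrow> \<iota> (tgt Q i) * d i + u (tgt Q i) * rmat G i = rmat K i * u (src Q i) + h i"
    unfolding cob_def by blast
  note [simp] = gd cochain_dims[OF u] cocyc_dims[OF h] cocyc_dims[OF d]
  show "cob Q G N (\<lambda>i. p (tgt Q i) * h i) (zc Q G N)" unfolding cob_def
  proof (intro exI[of _ "\<lambda>v. - (p v * u v)"] conjI allI impI)
    show "cochain Q G N (\<lambda>v. - (p v * u v))" unfolding cochain_def by (auto intro!: carrier_matI)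
    fix i assume i: "i < length (arr Q)"
    note [simp] = i
    have H: "p (tgt Q i) * (\<iota> (tgt Q i) * d i) + p (tgt Q i) * (u (tgt Q i) * rmat G i) =
      rmat N i * (p (src Q i) * u (src Q i)) + p (tgt Q i) * h i"
      using arg_cong[OF eq[OF i], of "\<lambda>X. p (tgt Q i) * X"] by (simp add: mring hom_comm_ext[OF wf vE vX bh])
    have Z: "p (tgt Q i) * (\<iota> (tgt Q i) * d i) = 0\<^sub>m (rdim N (tgt Q i)) (rdim G (src Q i))"
      by (simp add: splits_eqs_ext[OF sp ses])
    have "p (tgt Q i) * h i + - (p (tgt Q i) * (u (tgt Q i) * rmat G i)) =
       - (rmat N i * (p (src Q i) * u (src Q i))) + 0\<^sub>m (rdim N (tgt Q i)) (rdim G (src Q i))"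
      by (rule lin_F5c[OF _ _ _ H Z]; rule carrier_matI; simp)
    thus "p (tgt Q i) * h i + - (p (tgt Q i) * u (tgt Q i)) * rmat G i = rmat N i * - (p (src Q i) * u (src Q i)) + zc Q G N i"
      unfolding zc_def by (simp add: mring)
  qed
qed

lemma F6: assumes h: "cocyc Q G N h"
  shows "\<exists>d. cocyc Q G K d \<and> cob Q G N (\<lambda>i. p (tgt Q i) * d i) h"
proof (intro exI[of _ "\<lambda>i. ss (tgt Q i) * h i"] conjI)
  note [simp] = gd cocyc_dims[OF h]
  show "cocyc Q G K (\<lambda>i. ss (tgt Q i) * h i)" unfolding cocyc_def by (auto intro!: carrier_matI)
  have "cob Q G N (\<lambda>i. p (tgt Q i) * (ss (tgt Q i) * h i)) h = cob Q G N h h"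
    by (rule cob_cong) (simp_all add: splits_eqs_ext[OF sp ses])
  thus "cob Q G N (\<lambda>i. p (tgt Q i) * (ss (tgt Q i) * h i)) h" using cob_refl[OF wf vG vN h] by simp
qed

lemma IM: assumes f: "f \<in> hom Q G N"
  shows "cob Q G K (\<lambda>i. \<iota> (tgt Q i) * (kk i * f (src Q i))) (zc Q G K)"
  unfolding cob_def
proof (intro exI[of _ "\<lambda>v. ss v * f v"] conjI allI impI)
  note [simp] = gd hom_dims[OF f]
  show "cochain Q G K (\<lambda>v. ss v * f v)" unfolding cochain_def by (auto intro!: carrier_matI)
  fix i assume i: "i < length (arr Q)"
  note [simp] = i
  show "\<iota> (tgt Q i) * (kk i * f (src Q i)) + ss (tgt Q i) * f (tgt Q i) * rmat G i = rmat K i * (ss (src Q i) * f (src Q i)) + zc Q G K i"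
    unfolding zc_def by (simp add: mring i2_ext hom_comm[OF f i])
qed

lemma IK: assumes d: "cocyc Q G M d"
  shows "cob Q G N (\<lambda>i. p (tgt Q i) * (\<iota> (tgt Q i) * d i)) (zc Q G N)"
  unfolding cob_def
proof (intro exI[of _ "\<lambda>v. 0\<^sub>m (rdim N v) (rdim G v)"] conjI allI impI)
  note [simp] = gd cocyc_dims[OF d]
  show "cochain Q G N (\<lambda>v. 0\<^sub>m (rdim N v) (rdim G v))" unfolding cochain_def by simp
  fix i assume i: "i < length (arr Q)"
  note [simp] = i
  show "p (tgt Q i) * (\<iota> (tgt Q i) * d i) + 0\<^sub>m (rdim N (tgt Q i)) (rdim G (tgt Q i)) * rmat G i =
    rmat N i * 0\<^sub>m (rdim N (src Q i)) (rdim G (src Q i)) + zc Q G N i"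
    unfolding zc_def by (simp add: mring splits_eqs_ext[OF sp ses])
qed

end


section \<open>Components of morphisms from P\<close>

definition mk :: "nat \<Rightarrow> nat \<Rightarrow> 'k smor \<Rightarrow> 'k smor \<Rightarrow> nat \<Rightarrow> 'k smor" where
  "mk k i a b = (\<lambda>l. if l \<le> k then (if l = i then a else if Suc l = i then b else SZero) else SZero)"

lemma homP_char:
  assumes ik: "i \<le> k"
  shows "\<phi> \<in> homP Q G k X i \<longleftrightarrow> (\<exists>f\<in>hom Q G X. \<exists>c. (0 < i \<longrightarrow> c \<in> Ext1 Q G X) \<and> \<phi> = mk k i (SHom f) (SExt c))"
proof
  assume h: "\<phi> \<in> homP Q G k X i"
  hence comp: "\<And>j. j \<le> k \<Longrightarrow> \<phi> j \<in> shom Q G j X i" and out: "\<And>j. k < j \<Longrightarrow> \<phi> j = SZero"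
    unfolding homP_def by auto
  from comp[OF ik] obtain f where f: "f \<in> hom Q G X" and fi: "\<phi> i = SHom f" unfolding shom_def by auto
  obtain c where c: "\<And>j. i = Suc j \<Longrightarrow> c \<in> Ext1 Q G X \<and> \<phi> j = SExt c"
  proof (cases i)
    case (Suc j)
    have "\<phi> j \<in> shom Q G j X i" using comp[of j] ik Suc by simp
    then obtain c where "c \<in> Ext1 Q G X" "\<phi> j = SExt c" unfolding shom_def using Suc by auto
    then show ?thesis using that Suc by blast
  qed (use that in blast)
  have "\<phi> = mk k i (SHom f) (SExt c)"
  proof
    fix l show "\<phi> l = mk k i (SHom f) (SExt c) l"
    proof (cases "l \<le> k")
      case True
      show ?thesis
      proof (cases "l = i")
        case False
        show ?thesis
        proof (cases "Suc l = i")
          case True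
          then show ?thesis using c[of l] \<open>l \<le> k\<close> \<open>l \<noteq> i\<close> unfolding mk_def by auto
        next
          case False
          then show ?thesis using comp[OF \<open>l \<le> k\<close>] \<open>l \<noteq> i\<close> \<open>l \<le> k\<close> unfolding mk_def shom_def by auto
        qed
      qed (use fi True in \<open>simp add: mk_def\<close>)
    qed (use out in \<open>simp add: mk_def\<close>)
  qed
  moreover have "0 < i \<longrightarrow> c \<in> Ext1 Q G X" using c by (cases i) auto
  ultimately show "\<exists>f\<in>hom Q G X. \<exists>c. (0 < i \<longrightarrow> c \<in> Ext1 Q G X) \<and> \<phi> = mk k i (SHom f) (SExt c)" using f by blast
next
  assume "\<exists>f\<in>hom Q G X. \<exists>c. (0 < i \<longrightarrow> c \<in> Ext1 Q G X) \<and> \<phi> = mk k i (SHom f) (SExt c)"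
  then obtain f c where f: "f \<in> hom Q G X" and c: "0 < i \<longrightarrow> c \<in> Ext1 Q G X" and ph: "\<phi> = mk k i (SHom f) (SExt c)"
    by blast
  show "\<phi> \<in> homP Q G k X i" unfolding homP_def ph mk_def shom_def using f c by auto
qed

lemma mk_eq:
  assumes ik: "i \<le> k"
  shows "mk k i a b = mk k i a' b' \<longleftrightarrow> a = a' \<and> (0 < i \<longrightarrow> b = b')"
proof
  assume h: "mk k i a b = mk k i a' b'"
  have "a = a'" using fun_cong[OF h, of i] ik unfolding mk_def by simp
  moreover have "0 < i \<longrightarrow> b = b'"
  proof (cases i)
    case (Suc j) then show ?thesis using fun_cong[OF h, of j] ik unfolding mk_def by auto
  qed simp
  ultimately show "a = a' \<and> (0 < i \<longrightarrow> b = b')" by blast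
next
  assume "a = a' \<and> (0 < i \<longrightarrow> b = b')"
  then show "mk k i a b = mk k i a' b'" unfolding mk_def by (auto simp: fun_eq_iff)
qed

lemma zeroP_mk: "zeroP Q G k X i = mk k i (SHom (zeroh Q G X)) (SExt (split_cls Q G X))"
  unfolding zeroP_def mk_def szero_def by (auto simp: fun_eq_iff)

lemma hm_shom: "homP_map Q G k X Y i (SHom g) (mk k i (SHom f) (SExt c)) = mk k i (SHom (comp Q g f)) (SExt (push Q G X Y g c))"
  unfolding homP_map_def mk_def scomp_def szero_def by (auto simp: fun_eq_iff)

lemma hm_sext: "homP_map Q G k N M (Suc i) (SExt e) (mk k i (SHom f) (SExt c)) = mk k (Suc i) (SHom (zeroh Q G M)) (SExt (pull Q G N M f e))"
  unfolding homP_map_def mk_def scomp_def szero_def by (auto simp: fun_eq_iff)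

lemma induced_0: "m mod 3 = 0 \<Longrightarrow> induced Q G k M K N \<iota> p m = homP_map Q G k M K (m div 3) (SHom \<iota>)"
  unfolding induced_def seq_obj_def seq_shift_def seq_map_def by (auto simp: mod_Suc div_Suc)

lemma induced_1: "m mod 3 = 1 \<Longrightarrow> induced Q G k M K N \<iota> p m = homP_map Q G k K N (m div 3) (SHom p)"
  unfolding induced_def seq_obj_def seq_shift_def seq_map_def by (auto simp: mod_Suc div_Suc)

lemma induced_2: "m mod 3 = 2 \<Longrightarrow> induced Q G k M K N \<iota> p m = homP_map Q G k N M (Suc (m div 3)) (SExt (ext_cls Q N M (K, \<iota>, p)))"
  unfolding induced_def seq_obj_def seq_shift_def seq_map_def by (auto simp: mod_Suc div_Suc)


context sesG
begin

abbreviation "eta \<equiv> ext_cls Q N M (K, \<iota>, p)"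

lemma ih: "\<iota> \<in> hom Q M K" and ph: "p \<in> hom Q K N" using ah bh .

lemma ext1_G: "X = M \<or> X = K \<or> X = N \<Longrightarrow> Ext1 Q G X = {Ccls Q G X h | h. cocyc Q G X h}"
  using Ext1_char[OF wf vG vM] Ext1_char[OF wf vG vK] Ext1_char[OF wf vG vN] by (elim disjE) simp_all

lemma split_G: "X = M \<or> X = K \<or> X = N \<Longrightarrow> split_cls Q G X = Ccls Q G X (zc Q G X)"
  using split_Ccls[OF wf vG vM] split_Ccls[OF wf vG vK] split_Ccls[OF wf vG vN] by (elim disjE) simp_all

lemma split_in_Ext1: "X = M \<or> X = K \<or> X = N \<Longrightarrow> split_cls Q G X \<in> Ext1 Q G X"
proof -
  assume X: "X = M \<or> X = K \<or> X = N"
  have "Ccls Q G X (zc Q G X) \<in> {Ccls Q G X h | h. cocyc Q G X h}" using zc_cocyc by blast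
  thus ?thesis unfolding split_G[OF X] ext1_G[OF X] .
qed

lemma comp_zeroh: assumes "g \<in> hom Q X Y" shows "comp Q g (zeroh Q G X) = zeroh Q G Y"
  using assms by (auto simp: comp_def zeroh_def fun_eq_iff hom_dims)

lemma PM: assumes f: "f \<in> hom Q G M" and c: "c \<in> Ext1 Q G M"
  shows "(comp Q \<iota> f = zeroh Q G K \<and> push Q G M K \<iota> c = split_cls Q G K) \<longleftrightarrow>
         (f = zeroh Q G M \<and> (\<exists>g\<in>hom Q G N. pull Q G N M g eta = c))"
proof -
  obtain h where h: "cocyc Q G M h" and ch: "c = Ccls Q G M h" using c ext1_G by blast
  have ih': "cocyc Q G K (\<lambda>i. \<iota> (tgt Q i) * h i)" by (rule cocyc_left[OF wf h ih])
  have e1: "push Q G M K \<iota> c = split_cls Q G K \<longleftrightarrow> cob Q G K (\<lambda>i. \<iota> (tgt Q i) * h i) (zc Q G K)"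
    unfolding ch push_Ccls[OF wf vG vM vK h ih] split_G[of K, simplified]
    by (rule Ccls_eq_iff[OF wf vG vK ih' zc_cocyc])
  have e2: "pull Q G N M g eta = c \<longleftrightarrow> cob Q G M (\<lambda>i. kk i * g (src Q i)) h" if g: "g \<in> hom Q G N" for g
  proof -
    have kg: "cocyc Q G M (\<lambda>i. kk i * g (src Q i))" by (rule cocyc_right[OF wf kk_cocyc g])
    show ?thesis unfolding eta_Ccls ch pull_Ccls[OF wf vN vM vG kk_cocyc g]
      by (rule Ccls_eq_iff[OF wf vG vM kg h])
  qed
  have e3: "comp Q \<iota> f = zeroh Q G K \<longleftrightarrow> f = zeroh Q G M"
    using F1[OF f] comp_zeroh[OF ih] by blast
  show ?thesis unfolding e1 e3 F4[OF h] using e2 by blast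
qed

lemma PK: assumes c: "c \<in> Ext1 Q G K"
  shows "push Q G K N p c = split_cls Q G N \<longleftrightarrow> (\<exists>d\<in>Ext1 Q G M. push Q G M K \<iota> d = c)"
proof -
  obtain h where h: "cocyc Q G K h" and ch: "c = Ccls Q G K h" using c ext1_G by blast
  have ph': "cocyc Q G N (\<lambda>i. p (tgt Q i) * h i)" by (rule cocyc_left[OF wf h ph])
  have e1: "push Q G K N p c = split_cls Q G N \<longleftrightarrow> cob Q G N (\<lambda>i. p (tgt Q i) * h i) (zc Q G N)"
    unfolding ch push_Ccls[OF wf vG vK vN h ph] split_G[of N, simplified]
    by (rule Ccls_eq_iff[OF wf vG vN ph' zc_cocyc])
  have e2: "push Q G M K \<iota> (Ccls Q G M d) = c \<longleftrightarrow> cob Q G K (\<lambda>i. \<iota> (tgt Q i) * d i) h" if d: "cocyc Q G M d" for d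
  proof -
    have id: "cocyc Q G K (\<lambda>i. \<iota> (tgt Q i) * d i)" by (rule cocyc_left[OF wf d ih])
    show ?thesis unfolding ch push_Ccls[OF wf vG vM vK d ih] by (rule Ccls_eq_iff[OF wf vG vK id h])
  qed
  show ?thesis unfolding e1 F5[OF h] using e2 ext1_G[of M] by auto
qed

lemma PN1: assumes f: "f \<in> hom Q G N"
  shows "pull Q G N M f eta = split_cls Q G M \<longleftrightarrow> (\<exists>g\<in>hom Q G K. comp Q p g = f)"
proof -
  have kf: "cocyc Q G M (\<lambda>i. kk i * f (src Q i))" by (rule cocyc_right[OF wf kk_cocyc f])
  show ?thesis unfolding eta_Ccls pull_Ccls[OF wf vN vM vG kk_cocyc f] split_G[of M, simplified]
    Ccls_eq_iff[OF wf vG vM kf zc_cocyc] by (rule F3[OF f])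
qed

lemma PN2: assumes c: "c \<in> Ext1 Q G N" shows "\<exists>d\<in>Ext1 Q G K. push Q G K N p d = c"
proof -
  obtain h where h: "cocyc Q G N h" and ch: "c = Ccls Q G N h" using c ext1_G by blast
  obtain d where d: "cocyc Q G K d" and cd: "cob Q G N (\<lambda>i. p (tgt Q i) * d i) h" using F6[OF h] by blast
  have pd: "cocyc Q G N (\<lambda>i. p (tgt Q i) * d i)" by (rule cocyc_left[OF wf d ph])
  have "push Q G K N p (Ccls Q G K d) = c" unfolding ch push_Ccls[OF wf vG vK vN d ph]
    using Ccls_eq_iff[OF wf vG vN pd h] cd by blast
  moreover have "Ccls Q G K d \<in> Ext1 Q G K" using ext1_G[of K] d by blast
  ultimately show ?thesis by blast
qed

lemma pos_0: assumes "\<phi> \<in> homP Q G k M 0" and "homP_map Q G k M K 0 (SHom \<iota>) \<phi> = zeroP Q G k K 0"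
  shows "\<phi> = zeroP Q G k M 0"
proof -
  obtain f c where f: "f \<in> hom Q G M" and ph: "\<phi> = mk k 0 (SHom f) (SExt c)"
    using assms(1) by (auto simp: homP_char[of 0 k])
  have "comp Q \<iota> f = zeroh Q G K" using assms(2) unfolding ph hm_shom zeroP_mk mk_eq[OF le0] by simp
  hence "f = zeroh Q G M" by (rule F1[OF f])
  thus ?thesis unfolding ph zeroP_mk mk_eq[OF le0] by simp
qed

lemma pos_M: assumes jk: "Suc j \<le> k" and phi: "\<phi> \<in> homP Q G k M (Suc j)"
  shows "homP_map Q G k M K (Suc j) (SHom \<iota>) \<phi> = zeroP Q G k K (Suc j) \<longleftrightarrow>
     (\<exists>\<psi>\<in>homP Q G k N j. homP_map Q G k N M (Suc j) (SExt eta) \<psi> = \<phi>)"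
proof -
  have jk': "j \<le> k" using jk by simp
  obtain f c where f: "f \<in> hom Q G M" and c: "c \<in> Ext1 Q G M" and ph: "\<phi> = mk k (Suc j) (SHom f) (SExt c)"
    using phi by (auto simp: homP_char[OF jk])
  have L: "homP_map Q G k M K (Suc j) (SHom \<iota>) \<phi> = zeroP Q G k K (Suc j) \<longleftrightarrow>
     (comp Q \<iota> f = zeroh Q G K \<and> push Q G M K \<iota> c = split_cls Q G K)"
    unfolding ph hm_shom zeroP_mk mk_eq[OF jk] by simp
  have R: "(\<exists>\<psi>\<in>homP Q G k N j. homP_map Q G k N M (Suc j) (SExt eta) \<psi> = \<phi>) \<longleftrightarrow>
     (f = zeroh Q G M \<and> (\<exists>g\<in>hom Q G N. pull Q G N M g eta = c))"
  proof
    assume "\<exists>\<psi>\<in>homP Q G k N j. homP_map Q G k N M (Suc j) (SExt eta) \<psi> = \<phi>"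
    then obtain \<psi> where psi: "\<psi> \<in> homP Q G k N j" and e0: "homP_map Q G k N M (Suc j) (SExt eta) \<psi> = \<phi>" by blast
    from psi obtain g d where g: "g \<in> hom Q G N" and pe: "\<psi> = mk k j (SHom g) (SExt d)"
      by (auto simp: homP_char[OF jk'])
    from e0 have e: "homP_map Q G k N M (Suc j) (SExt eta) (mk k j (SHom g) (SExt d)) = \<phi>" unfolding pe .
    from e show "f = zeroh Q G M \<and> (\<exists>g\<in>hom Q G N. pull Q G N M g eta = c)"
      unfolding ph hm_sext mk_eq[OF jk] using g by auto
  next
    assume "f = zeroh Q G M \<and> (\<exists>g\<in>hom Q G N. pull Q G N M g eta = c)"
    then obtain g where fz: "f = zeroh Q G M" and g: "g \<in> hom Q G N" and gc: "pull Q G N M g eta = c" by blast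
    have "mk k j (SHom g) (SExt (split_cls Q G N)) \<in> homP Q G k N j"
      using g split_in_Ext1[of N] by (auto simp: homP_char[OF jk'])
    moreover have "homP_map Q G k N M (Suc j) (SExt eta) (mk k j (SHom g) (SExt (split_cls Q G N))) = \<phi>"
      unfolding ph hm_sext mk_eq[OF jk] using fz gc by simp
    ultimately show "\<exists>\<psi>\<in>homP Q G k N j. homP_map Q G k N M (Suc j) (SExt eta) \<psi> = \<phi>" by blast
  qed
  show ?thesis unfolding L R by (rule PM[OF f c])
qed

lemma pos_K: assumes ik: "i \<le> k" and phi: "\<phi> \<in> homP Q G k K i"
  shows "homP_map Q G k K N i (SHom p) \<phi> = zeroP Q G k N i \<longleftrightarrow>
     (\<exists>\<psi>\<in>homP Q G k M i. homP_map Q G k M K i (SHom \<iota>) \<psi> = \<phi>)"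
proof -
  obtain f c where f: "f \<in> hom Q G K" and c: "0 < i \<longrightarrow> c \<in> Ext1 Q G K" and ph: "\<phi> = mk k i (SHom f) (SExt c)"
    using phi by (auto simp: homP_char[OF ik])
  have L: "homP_map Q G k K N i (SHom p) \<phi> = zeroP Q G k N i \<longleftrightarrow>
     (comp Q p f = zeroh Q G N \<and> (0 < i \<longrightarrow> push Q G K N p c = split_cls Q G N))"
    unfolding ph hm_shom zeroP_mk mk_eq[OF ik] by simp
  have R: "(\<exists>\<psi>\<in>homP Q G k M i. homP_map Q G k M K i (SHom \<iota>) \<psi> = \<phi>) \<longleftrightarrow>
     ((\<exists>g\<in>hom Q G M. comp Q \<iota> g = f) \<and> (0 < i \<longrightarrow> (\<exists>d\<in>Ext1 Q G M. push Q G M K \<iota> d = c)))"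
  proof
    assume "\<exists>\<psi>\<in>homP Q G k M i. homP_map Q G k M K i (SHom \<iota>) \<psi> = \<phi>"
    then obtain \<psi> where psi: "\<psi> \<in> homP Q G k M i" and e0: "homP_map Q G k M K i (SHom \<iota>) \<psi> = \<phi>" by blast
    from psi obtain g d where g: "g \<in> hom Q G M" and d: "0 < i \<longrightarrow> d \<in> Ext1 Q G M" and pe: "\<psi> = mk k i (SHom g) (SExt d)"
      by (auto simp: homP_char[OF ik])
    from e0 have e: "homP_map Q G k M K i (SHom \<iota>) (mk k i (SHom g) (SExt d)) = \<phi>" unfolding pe .
    from e show "(\<exists>g\<in>hom Q G M. comp Q \<iota> g = f) \<and> (0 < i \<longrightarrow> (\<exists>d\<in>Ext1 Q G M. push Q G M K \<iota> d = c))"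
      unfolding ph hm_shom mk_eq[OF ik] using g d by auto
  next
    assume a: "(\<exists>g\<in>hom Q G M. comp Q \<iota> g = f) \<and> (0 < i \<longrightarrow> (\<exists>d\<in>Ext1 Q G M. push Q G M K \<iota> d = c))"
    then obtain g where g: "g \<in> hom Q G M" and gf: "comp Q \<iota> g = f" by blast
    obtain d where d: "0 < i \<longrightarrow> d \<in> Ext1 Q G M \<and> push Q G M K \<iota> d = c"
      using a by (cases "0 < i") auto
    have "mk k i (SHom g) (SExt d) \<in> homP Q G k M i"
      using g d by (auto simp: homP_char[OF ik])
    moreover have "homP_map Q G k M K i (SHom \<iota>) (mk k i (SHom g) (SExt d)) = \<phi>"
      unfolding ph hm_shom mk_eq[OF ik] using gf d by simp
    ultimately show "\<exists>\<psi>\<in>homP Q G k M i. homP_map Q G k M K i (SHom \<iota>) \<psi> = \<phi>" by blast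
  qed
  show ?thesis unfolding L R using F2[OF f] PK c by blast
qed

lemma pos_N: assumes ik: "Suc i \<le> k" and phi: "\<phi> \<in> homP Q G k N i"
  shows "homP_map Q G k N M (Suc i) (SExt eta) \<phi> = zeroP Q G k M (Suc i) \<longleftrightarrow>
     (\<exists>\<psi>\<in>homP Q G k K i. homP_map Q G k K N i (SHom p) \<psi> = \<phi>)"
proof -
  have ik': "i \<le> k" using ik by simp
  obtain f c where f: "f \<in> hom Q G N" and c: "0 < i \<longrightarrow> c \<in> Ext1 Q G N" and ph: "\<phi> = mk k i (SHom f) (SExt c)"
    using phi by (auto simp: homP_char[OF ik'])
  have L: "homP_map Q G k N M (Suc i) (SExt eta) \<phi> = zeroP Q G k M (Suc i) \<longleftrightarrow>
     pull Q G N M f eta = split_cls Q G M"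
    unfolding ph hm_sext zeroP_mk mk_eq[OF ik] by simp
  have R: "(\<exists>\<psi>\<in>homP Q G k K i. homP_map Q G k K N i (SHom p) \<psi> = \<phi>) \<longleftrightarrow>
     (\<exists>g\<in>hom Q G K. comp Q p g = f)"
  proof
    assume "\<exists>\<psi>\<in>homP Q G k K i. homP_map Q G k K N i (SHom p) \<psi> = \<phi>"
    then obtain \<psi> where psi: "\<psi> \<in> homP Q G k K i" and e0: "homP_map Q G k K N i (SHom p) \<psi> = \<phi>" by blast
    from psi obtain g d where g: "g \<in> hom Q G K" and pe: "\<psi> = mk k i (SHom g) (SExt d)"
      by (auto simp: homP_char[OF ik'])
    from e0 have e: "homP_map Q G k K N i (SHom p) (mk k i (SHom g) (SExt d)) = \<phi>" unfolding pe .
    from e show "\<exists>g\<in>hom Q G K. comp Q p g = f"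
      unfolding ph hm_shom mk_eq[OF ik'] using g by auto
  next
    assume "\<exists>g\<in>hom Q G K. comp Q p g = f"
    then obtain g where g: "g \<in> hom Q G K" and gf: "comp Q p g = f" by blast
    obtain d where d: "0 < i \<longrightarrow> d \<in> Ext1 Q G K \<and> push Q G K N p d = c"
      using PN2 c by (cases "0 < i") auto
    have "mk k i (SHom g) (SExt d) \<in> homP Q G k K i"
      using g d by (auto simp: homP_char[OF ik'])
    moreover have "homP_map Q G k K N i (SHom p) (mk k i (SHom g) (SExt d)) = \<phi>"
      unfolding ph hm_shom mk_eq[OF ik'] using gf d by simp
    ultimately show "\<exists>\<psi>\<in>homP Q G k K i. homP_map Q G k K N i (SHom p) \<psi> = \<phi>" by blast
  qed
  show ?thesis unfolding L R by (rule PN1[OF f])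
qed

end


lemma valid_dsum: "valid_rep Q A \<Longrightarrow> valid_rep Q B \<Longrightarrow> valid_rep Q (dsum Q A B)"
  unfolding valid_rep_def dsum_def by (auto intro!: four_block_carrier_mat)

lemma valid_zero_rep: "valid_rep Q zero_rep"
  unfolding valid_rep_def zero_rep_def by simp

lemma valid_dsum_list: "(\<forall>R\<in>set Rs. valid_rep Q R) \<Longrightarrow> valid_rep Q (dsum_list Q Rs)"
  unfolding dsum_list_def by (induction Rs) (auto simp: valid_zero_rep valid_dsum)

lemma generator_valid: "is_basic_generator Q G \<Longrightarrow> valid_rep Q G"
  unfolding is_basic_generator_def indec_def using valid_dsum_list by blast

theorem lemma2p1:
  fixes Q :: quiver and M K N G :: "'k::field rep" and \<iota> p :: "'k rhom" and k :: nat
  assumes "dynkin Q"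
    and "k \<ge> 1"
    and "ses Q M K N \<iota> p"
    and "is_basic_generator Q G"
  shows "(\<forall>\<phi>\<in>homP Q G k M 0.
            induced Q G k M K N \<iota> p 0 \<phi> = zeroP Q G k K 0 \<longrightarrow> \<phi> = zeroP Q G k M 0)
       \<and> (\<forall>m. 1 \<le> m \<and> m \<le> 3 * k + 1 \<longrightarrow>
            (\<forall>\<phi>\<in>homP Q G k (seq_obj M K N m) (seq_shift m).
               induced Q G k M K N \<iota> p m \<phi> = zeroP Q G k (seq_obj M K N (Suc m)) (seq_shift (Suc m))
               \<longleftrightarrow> (\<exists>\<psi>\<in>homP Q G k (seq_obj M K N (m - 1)) (seq_shift (m - 1)).
                      induced Q G k M K N \<iota> p (m - 1) \<psi> = \<phi>)))"
proof -
  have wf: "wfq Q" using dynkin_wfq[OF assms(1)] .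
  have vG: "valid_rep Q G" using generator_valid[OF assms(4)] .
  interpret S: sesG Q M K N G \<iota> p using wf assms(3) vG by unfold_locales
  have c1: "\<forall>\<phi>\<in>homP Q G k M 0.
            induced Q G k M K N \<iota> p 0 \<phi> = zeroP Q G k K 0 \<longrightarrow> \<phi> = zeroP Q G k M 0"
  proof (intro ballI impI)
    fix \<phi> assume a: "\<phi> \<in> homP Q G k M 0" and b: "induced Q G k M K N \<iota> p 0 \<phi> = zeroP Q G k K 0"
    have "induced Q G k M K N \<iota> p 0 = homP_map Q G k M K 0 (SHom \<iota>)" using induced_0[of 0 Q G k M K N \<iota> p] by simp
    with b have "homP_map Q G k M K 0 (SHom \<iota>) \<phi> = zeroP Q G k K 0" by simp
    then show "\<phi> = zeroP Q G k M 0" by (rule S.pos_0[OF a])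
  qed
  have c2: "induced Q G k M K N \<iota> p m \<phi> = zeroP Q G k (seq_obj M K N (Suc m)) (seq_shift (Suc m))
               \<longleftrightarrow> (\<exists>\<psi>\<in>homP Q G k (seq_obj M K N (m - 1)) (seq_shift (m - 1)).
                      induced Q G k M K N \<iota> p (m - 1) \<psi> = \<phi>)"
    if m1: "1 \<le> m" and mk: "m \<le> 3 * k + 1" and phi: "\<phi> \<in> homP Q G k (seq_obj M K N m) (seq_shift m)" for m \<phi>
  proof -
    define i where "i = m div 3"
    have "m mod 3 = 0 \<or> m mod 3 = 1 \<or> m mod 3 = 2" by arith
    moreover
    { assume r: "m mod 3 = 0"
      obtain j where ij: "i = Suc j" using m1 r unfolding i_def by (cases "m div 3") auto
      have m: "m = 3 * j + 3" using r ij unfolding i_def by arith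
      have jk: "Suc j \<le> k" using mk m by arith
      have a: "m mod 3 = 0" "m div 3 = Suc j" "Suc m mod 3 = 1" "Suc m div 3 = Suc j" "(m - 1) mod 3 = 2" "(m - 1) div 3 = j"
        unfolding m by (simp_all add: mod_Suc)
      have o: "seq_obj M K N m = M" "seq_shift m = Suc j" "seq_obj M K N (Suc m) = K" "seq_shift (Suc m) = Suc j"
        "seq_obj M K N (m - 1) = N" "seq_shift (m - 1) = j"
        unfolding seq_obj_def seq_shift_def a by simp_all
      have i0: "induced Q G k M K N \<iota> p m = homP_map Q G k M K (Suc j) (SHom \<iota>)"
        using induced_0[of m Q G k M K N \<iota> p] a by simp
      have i2: "induced Q G k M K N \<iota> p (m - 1) = homP_map Q G k N M (Suc j) (SExt S.eta)"
        using induced_2[of "m - 1" Q G k M K N \<iota> p] a by simp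
      have ph: "\<phi> \<in> homP Q G k M (Suc j)" using phi unfolding o .
      have ?thesis unfolding o i0 i2 by (rule S.pos_M[OF jk ph]) }
    moreover
    { assume r: "m mod 3 = 1"
      have m: "m = 3 * i + 1" using r unfolding i_def by arith
      have ik: "i \<le> k" using mk m by arith
      have a: "m mod 3 = 1" "m div 3 = i" "Suc m mod 3 = 2" "Suc m div 3 = i" "(m - 1) mod 3 = 0" "(m - 1) div 3 = i"
        unfolding m by (simp_all add: mod_Suc)
      have o: "seq_obj M K N m = K" "seq_shift m = i" "seq_obj M K N (Suc m) = N" "seq_shift (Suc m) = i"
        "seq_obj M K N (m - 1) = M" "seq_shift (m - 1) = i"
        unfolding seq_obj_def seq_shift_def a by simp_all
      have i1: "induced Q G k M K N \<iota> p m = homP_map Q G k K N i (SHom p)"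
        using induced_1[of m Q G k M K N \<iota> p] a by simp
      have i0: "induced Q G k M K N \<iota> p (m - 1) = homP_map Q G k M K i (SHom \<iota>)"
        using induced_0[of "m - 1" Q G k M K N \<iota> p] a by simp
      have ph: "\<phi> \<in> homP Q G k K i" using phi unfolding o .
      have ?thesis unfolding o i0 i1 by (rule S.pos_K[OF ik ph]) }
    moreover
    { assume r: "m mod 3 = 2"
      have m: "m = 3 * i + 2" using r unfolding i_def by arith
      have ik: "Suc i \<le> k" using mk m by arith
      have a: "m mod 3 = 2" "m div 3 = i" "Suc m mod 3 = 0" "Suc m div 3 = Suc i" "(m - 1) mod 3 = 1" "(m - 1) div 3 = i"
        unfolding m by (simp_all add: mod_Suc)
      have o: "seq_obj M K N m = N" "seq_shift m = i" "seq_obj M K N (Suc m) = M" "seq_shift (Suc m) = Suc i"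
        "seq_obj M K N (m - 1) = K" "seq_shift (m - 1) = i"
        unfolding seq_obj_def seq_shift_def a by simp_all
      have i2: "induced Q G k M K N \<iota> p m = homP_map Q G k N M (Suc i) (SExt S.eta)"
        using induced_2[of m Q G k M K N \<iota> p] a by simp
      have i1: "induced Q G k M K N \<iota> p (m - 1) = homP_map Q G k K N i (SHom p)"
        using induced_1[of "m - 1" Q G k M K N \<iota> p] a by simp
      have ph: "\<phi> \<in> homP Q G k N i" using phi unfolding o .
      have ?thesis unfolding o i1 i2 by (rule S.pos_N[OF ik ph]) }
    ultimately show ?thesis by meson
  qed
  show ?thesis using c1 c2 by blast
qed

end
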